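(* Consider the delayed linear system \[ \dot x_i(t)=g_i(y_i)+\frac{K}{c_i}\sum_{j\in\mathcal N_i}a_{ij}\bigl(x_j(t-\tau_{ij})-x_i(t)\bigr),\quad t>0,\qquad x_i(t)=\phi_i(t),\ t\in[-\tau,0],\quad i=1,\dots,N, \] and assume: (a1) $K>0$ and $c_i>0$ for all $i$; (a2) the delays satisfy $0\le\tau_{ij}\le\tau:=\max_{i\neq j}\tau_{ij}<+\infty$; (a3) the initial functions $\phi_i$ are continuous and bounded on $[-\tau,0]$. Let $\mathbf L$ be the Laplacian of the associated digraph $\mathscr G$ and let $\boldsymbol\gamma=(\gamma_1,\dots,\gamma_N)^T$ be a left eigenvector of $\mathbf L$ for the eigenvalue $0$, i.e. $\boldsymbol\gamma^T\mathbf L=\mathbf 0^T$, normalized with $\|\boldsymbol\gamma\|=1$ and sign chosen so that its entries are nonnegative. Then the system globally synchronizes for every choice of finite delays $\{\tau_{ij}\}$ if and only if $\mathscr G$ is quasi-strongly connected. In that case the synchronized state (common limit of all state derivatives) is \[ \omega^\star=\frac{\sum_{i=1}^N\gamma_i c_i g_i(y_i)}{\sum_{i=1}^N\gamma_i c_i+K\sum_{i=1}^N\sum_{j\in\mathcal N_i}\gamma_i a_{ij}\tau_{ij}}, \] where $\gamma_i>0$ if and only if node $i$ can reach all other nodes of $\mathscr G$ through a directed path, and $\gamma_i=0$ otherwise.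
   Context: Network of $N$ nodes. Node $i$ has a scalar measurement $y_i\in\mathbb R$, a real function $g_i:\mathbb R\to\mathbb R$, a coefficient $c_i>0$, and a scalar state $x_i(t)$. $K>0$ is a coupling gain. For $i\neq j$, $a_{ij}\ge 0$ is a link coefficient (in general $a_{ij}\neq a_{ji}$), $\mathcal N_i=\{j\neq i: a_{ij}\neq 0\}$, and $\tau_{ij}\ge0$ is a constant delay on the link from $j$ to $i$. Digraph $\mathscr G$: vertices $\{1,\dots,N\}$, with a directed edge from $j$ to $i$ (information flows from $j$ to $i$) of weight $a_{ij}$ whenever $a_{ij}>0$. Adjacency matrix $[\mathbf A]_{ij}=a_{ij}$ (zero diagonal), $\mathbf D=\mathrm{diag}(\sum_j a_{1j},\dots,\sum_j a_{Nj})$, Laplacian $\mathbf L=\mathbf D-\mathbf A$. Node $i$ reaches node $j$ if there is a directed path from $i$ to $j$ along edges. $\mathscr G$ is quasi-strongly connected (QSC) if for every ordered pair of nodes $u,v$ there exists a node $r$ that reaches both $u$ and $v$. Synchronization: a solution $\{x_i^\star(t)\}$ is a synchronized state if $\dot x_i^\star(t)=\omega^\star$ for all $i$ and $t$, with $\omega^\star$ constant. The system globally synchronizes if a synchronized state exists and, for every admissible set of initial functions $\{\phi_i\}$, every solution satisfies $\lim_{t\to\infty}|\dot x_i(t)-\omega^\star|=0$ for all $i$.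
   Formalization: The left side of the equivalence asserts global synchronization for every choice of the functions $g_i$, measurements $y_i$ and finite delays $\{\tau_{ij}\}$ (with $c_i$, K and $a_{ij}$ fixed), not only for the given $g_i(y_i)$. The statement above fails without it. *)

theory Defs
  imports "HOL-Analysis.Analysis"
begin

text \<open>Nodes are the elements of a finite type 'n (so N = CARD('n) \<ge> 1).
  The link coefficient a i j (i \<noteq> j) is the weight of the edge from j to i;
  diagonal values a i i are ignored (the adjacency matrix has zero diagonal).\<close>

definition nbrs :: "('n \<Rightarrow> 'n \<Rightarrow> real) \<Rightarrow> 'n \<Rightarrow> 'n set" where
  "nbrs a i = {j. j \<noteq> i \<and> a i j \<noteq> 0}"

definition adjacency :: "('n::finite \<Rightarrow> 'n \<Rightarrow> real) \<Rightarrow> real^'n^'n" where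
  "adjacency a = (\<chi> i j. if i = j then 0 else a i j)"

definition degree_mat :: "('n::finite \<Rightarrow> 'n \<Rightarrow> real) \<Rightarrow> real^'n^'n" where
  "degree_mat a = (\<chi> i j. if i = j then (\<Sum>k\<in>UNIV. adjacency a $ i $ k) else 0)"

definition laplacian :: "('n::finite \<Rightarrow> 'n \<Rightarrow> real) \<Rightarrow> real^'n^'n" where
  "laplacian a = degree_mat a - adjacency a"

definition edges :: "('n \<Rightarrow> 'n \<Rightarrow> real) \<Rightarrow> ('n \<times> 'n) set" where
  "edges a = {(j, i). i \<noteq> j \<and> a i j > 0}"

definition reaches :: "('n \<Rightarrow> 'n \<Rightarrow> real) \<Rightarrow> 'n \<Rightarrow> 'n \<Rightarrow> bool" where
  "reaches a u v \<longleftrightarrow> (u, v) \<in> (edges a)\<^sup>*"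

definition QSC :: "('n \<Rightarrow> 'n \<Rightarrow> real) \<Rightarrow> bool" where
  "QSC a \<longleftrightarrow> (\<forall>u v. \<exists>r. reaches a r u \<and> reaches a r v)"

definition delays_ok :: "('n \<Rightarrow> 'n \<Rightarrow> real) \<Rightarrow> bool" where
  "delays_ok \<tau> \<longleftrightarrow> (\<forall>i j. i \<noteq> j \<longrightarrow> 0 \<le> \<tau> i j)"

text \<open>Maximal delay tau = max over i \<noteq> j of tau_ij (0 if there is only one node).\<close>
definition tau_max :: "('n::finite \<Rightarrow> 'n \<Rightarrow> real) \<Rightarrow> real" where
  "tau_max \<tau> = Max (insert 0 {\<tau> i j | i j. i \<noteq> j})"

definition admissible_init :: "('n::finite \<Rightarrow> 'n \<Rightarrow> real) \<Rightarrow> ('n \<Rightarrow> real \<Rightarrow> real) \<Rightarrow> bool" where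
  "admissible_init \<tau> \<phi> \<longleftrightarrow>
     (\<forall>i. continuous_on {- tau_max \<tau>..0} (\<phi> i) \<and> bounded (\<phi> i ` {- tau_max \<tau>..0}))"

definition is_solution ::
  "('n::finite \<Rightarrow> real \<Rightarrow> real) \<Rightarrow> ('n \<Rightarrow> real) \<Rightarrow> ('n \<Rightarrow> real) \<Rightarrow> real \<Rightarrow>
   ('n \<Rightarrow> 'n \<Rightarrow> real) \<Rightarrow> ('n \<Rightarrow> 'n \<Rightarrow> real) \<Rightarrow>
   ('n \<Rightarrow> real \<Rightarrow> real) \<Rightarrow> ('n \<Rightarrow> real \<Rightarrow> real) \<Rightarrow> bool" where
  "is_solution g y c K a \<tau> \<phi> x \<longleftrightarrow>
     (\<forall>i. (\<forall>t\<in>{- tau_max \<tau>..0}. x i t = \<phi> i t)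
        \<and> continuous_on {- tau_max \<tau>..} (x i)
        \<and> (\<forall>t>0. (x i has_real_derivative
              (g i (y i) + K / c i * (\<Sum>j\<in>nbrs a i. a i j * (x j (t - \<tau> i j) - x i t)))) (at t)))"

definition globally_synchronizes_to ::
  "('n::finite \<Rightarrow> real \<Rightarrow> real) \<Rightarrow> ('n \<Rightarrow> real) \<Rightarrow> ('n \<Rightarrow> real) \<Rightarrow> real \<Rightarrow>
   ('n \<Rightarrow> 'n \<Rightarrow> real) \<Rightarrow> ('n \<Rightarrow> 'n \<Rightarrow> real) \<Rightarrow> real \<Rightarrow> bool" where
  "globally_synchronizes_to g y c K a \<tau> \<omega> \<longleftrightarrow>
     (\<exists>\<phi> xs. admissible_init \<tau> \<phi> \<and> is_solution g y c K a \<tau> \<phi> xs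
            \<and> (\<forall>i. \<forall>t>0. (xs i has_real_derivative \<omega>) (at t)))
     \<and> (\<forall>\<phi> x. admissible_init \<tau> \<phi> \<longrightarrow> is_solution g y c K a \<tau> \<phi> x \<longrightarrow>
            (\<forall>i. ((\<lambda>t. \<bar>deriv (x i) t - \<omega>\<bar>) \<longlongrightarrow> 0) at_top))"

definition globally_synchronizes ::
  "('n::finite \<Rightarrow> real \<Rightarrow> real) \<Rightarrow> ('n \<Rightarrow> real) \<Rightarrow> ('n \<Rightarrow> real) \<Rightarrow> real \<Rightarrow>
   ('n \<Rightarrow> 'n \<Rightarrow> real) \<Rightarrow> ('n \<Rightarrow> 'n \<Rightarrow> real) \<Rightarrow> bool" where
  "globally_synchronizes g y c K a \<tau> \<longleftrightarrow> (\<exists>\<omega>. globally_synchronizes_to g y c K a \<tau> \<omega>)"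

definition normalized_left_null :: "('n::finite \<Rightarrow> 'n \<Rightarrow> real) \<Rightarrow> real^'n \<Rightarrow> bool" where
  "normalized_left_null a \<gamma> \<longleftrightarrow>
     \<gamma> v* laplacian a = 0 \<and> norm \<gamma> = 1 \<and> (\<forall>i. 0 \<le> \<gamma> $ i)"

definition omega_star ::
  "('n::finite \<Rightarrow> real \<Rightarrow> real) \<Rightarrow> ('n \<Rightarrow> real) \<Rightarrow> ('n \<Rightarrow> real) \<Rightarrow> real \<Rightarrow>
   ('n \<Rightarrow> 'n \<Rightarrow> real) \<Rightarrow> ('n \<Rightarrow> 'n \<Rightarrow> real) \<Rightarrow> real^'n \<Rightarrow> real" where
  "omega_star g y c K a \<tau> \<gamma> =
     (\<Sum>i\<in>UNIV. \<gamma> $ i * c i * g i (y i)) /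
     ((\<Sum>i\<in>UNIV. \<gamma> $ i * c i) + K * (\<Sum>i\<in>UNIV. \<Sum>j\<in>nbrs a i. \<gamma> $ i * a i j * \<tau> i j))"

end

theory Submission
  imports Defs
begin


lemma ex_argmax: "finite S \<Longrightarrow> S \<noteq> {} \<Longrightarrow> \<exists>m\<in>S. \<forall>k\<in>S. f k \<le> (f m::real)"
proof -
  assume "finite S" "S \<noteq> {}"
  then have "Max (f ` S) \<in> f ` S" by simp
  then obtain m where m: "m \<in> S" "f m = Max (f ` S)" by auto
  have "\<forall>k\<in>S. f k \<le> f m" using \<open>finite S\<close> m(2) by simp
  then show ?thesis using m(1) by blast
qed

lemma ex_argmin: "finite S \<Longrightarrow> S \<noteq> {} \<Longrightarrow> \<exists>m\<in>S. \<forall>k\<in>S. f m \<le> (f k::real)"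
  using ex_argmax[of S "\<lambda>k. - f k"] by auto

lemma nbrs_pos:
  assumes "\<forall>i j. i \<noteq> j \<longrightarrow> 0 \<le> a i j" "j \<in> nbrs a i"
  shows "0 < a i j" "j \<noteq> i" "(j,i) \<in> edges a"
  using assms by (auto simp: nbrs_def edges_def less_le)

lemma edge_nbrs: "(j,i) \<in> edges a \<Longrightarrow> j \<in> nbrs a i"
  by (auto simp: nbrs_def edges_def)

lemma reaches_refl: "reaches a u u" by (simp add: reaches_def)
lemma reaches_trans: "reaches a u v \<Longrightarrow> reaches a v w \<Longrightarrow> reaches a u w"
  unfolding reaches_def by (meson rtrancl_trans)
lemma reaches_edge: "(u,v) \<in> edges a \<Longrightarrow> reaches a v w \<Longrightarrow> reaches a u w"
  unfolding reaches_def by (meson converse_rtrancl_into_rtrancl)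

lemma QSC_root:
  fixes a :: "'n::finite \<Rightarrow> 'n \<Rightarrow> real"
  assumes "QSC a" shows "\<exists>r. \<forall>j. reaches a r j"
proof -
  have "\<exists>r. \<forall>j\<in>F. reaches a r j" if "finite F" for F :: "'n set"
    using that
  proof (induction F rule: finite_induct)
    case empty then show ?case by auto
  next
    case (insert v F)
    then obtain r where r: "\<forall>j\<in>F. reaches a r j" by auto
    from assms obtain r' where r1: "reaches a r' r" and r2: "reaches a r' v" unfolding QSC_def by blast
    have "reaches a r' j" if "j \<in> insert v F" for j
    proof (cases "j = v")
      case True then show ?thesis using r2 by simp
    next
      case False then have "j \<in> F" using that by simp
      then show ?thesis using reaches_trans[OF r1] r by blast
    qed
    then show ?case by blast
  qed
  from this[of UNIV] show ?thesis by auto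
qed

definition Aof :: "('n \<Rightarrow> 'n \<Rightarrow> real) \<Rightarrow> 'n \<Rightarrow> 'n \<Rightarrow> real" where
  "Aof a i j = (if i = j then 0 else a i j)"

lemma sum_Aof: "(\<Sum>j\<in>UNIV. Aof a i j * f j) = (\<Sum>j\<in>nbrs a i. a i j * f j)" for a :: "'n::finite \<Rightarrow> 'n \<Rightarrow> real"
  by (rule sum.mono_neutral_cong_right) (auto simp: nbrs_def Aof_def)

lemma sum_Aof1: "(\<Sum>j\<in>UNIV. Aof a i j) = (\<Sum>j\<in>nbrs a i. a i j)" for a :: "'n::finite \<Rightarrow> 'n \<Rightarrow> real"
  using sum_Aof[of a i "\<lambda>_. 1"] by simp

lemma lap_entry: "laplacian a $ i $ j = (if i = j then (\<Sum>k\<in>UNIV. Aof a i k) else 0) - Aof a i j"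
  by (simp add: laplacian_def degree_mat_def adjacency_def Aof_def)

lemma if_distrib_arg: "(\<Sum>j\<in>UNIV. (if i = j then (X::real) else 0) * f j) = X * f i" for i :: "'n::finite"
proof -
  have "(\<Sum>j\<in>UNIV. (if i = j then (X::real) else 0) * f j) = (\<Sum>j\<in>UNIV. if i = j then X * f j else 0)"
    by (rule sum.cong) auto
  then show ?thesis by simp
qed

lemma if_distrib_arg2: "(\<Sum>i\<in>UNIV. f i * (if i = j then X i else 0)) = (X j::real) * f j" for j :: "'n::finite"
proof -
  have "(\<Sum>i\<in>UNIV. f i * (if i = j then X i else 0)) = (\<Sum>i\<in>UNIV. if j = i then X j * f j else 0)"
    by (rule sum.cong) auto
  then show ?thesis by simp
qed

lemma lap_mv: "(laplacian a *v d) $ i = (\<Sum>j\<in>nbrs a i. a i j * (d$i - d$j))"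
proof -
  have "(laplacian a *v d) $ i = (\<Sum>j\<in>UNIV. ((if i = j then (\<Sum>k\<in>UNIV. Aof a i k) else 0) - Aof a i j) * d$j)"
    by (simp add: matrix_vector_mult_def lap_entry)
  also have "\<dots> = (\<Sum>j\<in>UNIV. (if i = j then (\<Sum>k\<in>UNIV. Aof a i k) else 0) * d$j) - (\<Sum>j\<in>UNIV. Aof a i j * d$j)"
    by (simp add: left_diff_distrib sum_subtractf)
  also have "\<dots> = (\<Sum>k\<in>UNIV. Aof a i k) * d$i - (\<Sum>j\<in>UNIV. Aof a i j * d$j)"
    by (simp add: if_distrib_arg)
  also have "\<dots> = (\<Sum>j\<in>nbrs a i. a i j * (d$i - d$j))"
    by (simp add: sum_Aof sum_Aof1 sum_distrib_right right_diff_distrib sum_subtractf)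
  finally show ?thesis .
qed

lemma lap_vm: "(v v* laplacian a) $ j = v$j * (\<Sum>k\<in>UNIV. Aof a j k) - (\<Sum>i\<in>UNIV. v$i * Aof a i j)"
proof -
  have "(v v* laplacian a) $ j = (\<Sum>i\<in>UNIV. ((if i = j then (\<Sum>k\<in>UNIV. Aof a i k) else 0) - Aof a i j) * v$i)"
    by (simp add: vector_matrix_mult_def lap_entry mult.commute)
  also have "\<dots> = (\<Sum>i\<in>UNIV. (if i = j then (\<Sum>k\<in>UNIV. Aof a i k) else 0) * v$i) - (\<Sum>i\<in>UNIV. Aof a i j * v$i)"
    by (simp add: left_diff_distrib sum_subtractf)
  also have "\<dots> = v$j * (\<Sum>k\<in>UNIV. Aof a j k) - (\<Sum>i\<in>UNIV. v$i * Aof a i j)"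
    by (simp add: if_distrib_arg2 mult.commute)
  finally show ?thesis .
qed

lemma Aof_nonneg: "\<forall>i j. i \<noteq> j \<longrightarrow> 0 \<le> a i j \<Longrightarrow> 0 \<le> Aof a i j"
  by (simp add: Aof_def)

lemma Aof_pos_edge: "0 < Aof a i j \<Longrightarrow> (j, i) \<in> edges a"
  by (auto simp: Aof_def edges_def split: if_splits)

lemma edge_Aof: "(j, i) \<in> edges a \<Longrightarrow> Aof a i j = a i j \<and> 0 < a i j"
  by (auto simp: Aof_def edges_def)



lemma max_spread:
  fixes f :: "'n::finite \<Rightarrow> real"
  assumes nn: "\<forall>i j. i \<noteq> j \<longrightarrow> 0 \<le> a i j" and mx: "\<forall>k. f k \<le> f i"
    and s: "(\<Sum>j\<in>nbrs a i. a i j * (f i - f j)) \<le> 0" and e: "(j,i) \<in> edges a"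
  shows "f j = f i"
proof -
  have t: "\<forall>k\<in>nbrs a i. 0 \<le> a i k * (f i - f k)"
    using nn mx by (auto simp: nbrs_def)
  have "(\<Sum>j\<in>nbrs a i. a i j * (f i - f j)) = 0" using s t by (meson antisym sum_nonneg)
  then have "\<forall>k\<in>nbrs a i. a i k * (f i - f k) = 0" using t by (simp add: sum_nonneg_eq_0_iff)
  moreover have "j \<in> nbrs a i" "0 < a i j" using e by (auto simp: nbrs_def edges_def)
  ultimately show ?thesis by auto
qed

lemma null_const:
  fixes a :: "'n::finite \<Rightarrow> 'n \<Rightarrow> real"
  assumes q: "QSC a" and nn: "\<forall>i j. i \<noteq> j \<longrightarrow> 0 \<le> a i j" and z: "laplacian a *v d = 0"
  shows "d$i = d$j"
proof -
  obtain r where r: "\<forall>j. reaches a r j" using QSC_root[OF q] by blast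
  have key: "f r = f m" if mx: "\<forall>k. f k \<le> f m" and zf: "\<forall>i. (\<Sum>j\<in>nbrs a i. a i j * (f i - f j)) = 0"
    for f :: "'n \<Rightarrow> real" and m
  proof -
    have "(r, m) \<in> (edges a)\<^sup>*" using r by (simp add: reaches_def)
    then show ?thesis
    proof (induction rule: converse_rtrancl_induct)
      case base then show ?case by simp
    next
      case (step y z)
      have mz: "\<forall>k. f k \<le> f z" using mx step(3) by simp
      have "f y = f z"
        by (rule max_spread[OF nn mz _ step(1)]) (use zf in simp)
      then show ?case using step by simp
    qed
  qed
  have zf: "\<forall>i. (\<Sum>j\<in>nbrs a i. a i j * (d$i - d$j)) = 0"
    using z by (metis lap_mv zero_index)
  have zf': "\<forall>i. (\<Sum>j\<in>nbrs a i. a i j * ((- d$i) - (- d$j))) = 0"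
  proof
    fix i
    have "(\<Sum>j\<in>nbrs a i. a i j * ((- d$i) - (- d$j))) = - (\<Sum>j\<in>nbrs a i. a i j * (d$i - d$j))"
      by (simp add: sum_negf[symmetric] algebra_simps)
    then show "(\<Sum>j\<in>nbrs a i. a i j * ((- d$i) - (- d$j))) = 0" using zf by simp
  qed
  obtain m where m: "\<forall>k. d$k \<le> d$m"
    using ex_argmax[of "UNIV::'n set" "\<lambda>k. d$k"] by auto
  obtain m' where m': "\<forall>k. d$m' \<le> d$k"
    using ex_argmin[of "UNIV::'n set" "\<lambda>k. d$k"] by auto
  have "d$r = d$m" using key[of "\<lambda>k. d$k" m] m zf by auto
  moreover have "- d$r = - d$m'" using key[of "\<lambda>k. - d$k" m'] m' zf' by auto
  ultimately show ?thesis using m m' by (metis antisym neg_equal_iff_equal)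
qed



lemma lap_range:
  fixes a :: "'n::finite \<Rightarrow> 'n \<Rightarrow> real" and \<gamma> b :: "real^'n"
  assumes q: "QSC a" and nn: "\<forall>i j. i \<noteq> j \<longrightarrow> 0 \<le> a i j"
    and g0: "\<gamma> \<noteq> 0" and gl: "\<gamma> v* laplacian a = 0" and gb: "\<gamma> \<bullet> b = 0"
  shows "\<exists>d. laplacian a *v d = b"
proof -
  define one :: "real^'n" where "one = (\<chi> i. 1)"
  define H where "H = {x::real^'n. one \<bullet> x = 0}"
  define f where "f = (\<lambda>x. laplacian a *v x)"
  have lin: "linear f" unfolding f_def by simp
  have one0: "one \<noteq> 0" by (simp add: one_def vec_eq_iff)
  have sH: "subspace H" unfolding H_def by (rule subspace_hyperplane)
  have spH: "span H = H" using sH by (simp add: span_eq_iff)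
  have injH: "inj_on f H"
  proof (rule inj_onI)
    fix x y assume x: "x \<in> H" and y: "y \<in> H" and e: "f x = f y"
    have z: "laplacian a *v (x - y) = 0" using e by (simp add: f_def matrix_vector_mult_diff_distrib)
    have c: "(x - y)$i = (x - y)$k" for i k using null_const[OF q nn z] by blast
    have "one \<bullet> (x - y) = 0" using x y by (simp add: H_def inner_diff_right)
    moreover have "one \<bullet> (x - y) = (\<Sum>i\<in>UNIV. (x - y)$i)" by (simp add: inner_vec_def one_def)
    ultimately have "(\<Sum>i\<in>UNIV. (x - y)$i) = 0" by simp
    moreover have "(\<Sum>i\<in>UNIV. (x - y)$i) = (\<Sum>i\<in>(UNIV::'n set). (x - y)$k)" for k :: 'n
      by (rule sum.cong[OF refl]) (rule c)
    ultimately have "\<forall>k. of_nat CARD('n) * (x - y)$k = 0" by simp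
    then have "\<forall>k. (x - y)$k = 0" by simp
    then show "x = y" by (simp add: vec_eq_iff)
  qed
  have inj: "inj_on f (span H)" unfolding spH by (rule injH)
  have dimfH: "dim (f ` H) = dim H" by (rule dim_image_eq[OF lin inj])
  have dimH: "dim H = DIM(real^'n) - 1" unfolding H_def by (rule dim_hyperplane[OF one0])
  define G where "G = {x::real^'n. \<gamma> \<bullet> x = 0}"
  have dimG: "dim G = DIM(real^'n) - 1" unfolding G_def by (rule dim_hyperplane[OF g0])
  have sub: "f ` H \<subseteq> G"
  proof
    fix z assume "z \<in> f ` H"
    then obtain x where "z = laplacian a *v x" by (auto simp: f_def)
    then show "z \<in> G" using gl by (simp add: G_def dot_lmul_matrix[symmetric])
  qed
  have sfH: "subspace (f ` H)" using lin sH by (rule linear_subspace_image)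
  have "f ` H = G"
    by (rule subspace_dim_equal[OF sfH _ sub]) (use dimfH dimH dimG in \<open>auto simp: G_def subspace_hyperplane\<close>)
  moreover have "b \<in> G" using gb by (simp add: G_def)
  ultimately show ?thesis by (auto simp: f_def)
qed

lemma exists_gamma:
  fixes a :: "'n::finite \<Rightarrow> 'n \<Rightarrow> real"
  assumes nn: "\<forall>i j. i \<noteq> j \<longrightarrow> 0 \<le> a i j"
  shows "\<exists>\<gamma>. normalized_left_null a \<gamma>"
proof -
  define one :: "real^'n" where "one = (\<chi> i. 1)"
  define f where "f = (\<lambda>x. laplacian a *v x)"
  have lin: "linear f" unfolding f_def by simp
  have one0: "one \<noteq> 0" by (simp add: one_def vec_eq_iff)
  have f1: "laplacian a *v one = 0" by (simp add: vec_eq_iff lap_mv one_def)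
  have ninj: "\<not> inj ((*v) (laplacian a))"
  proof
    assume i: "inj ((*v) (laplacian a))"
    have "laplacian a *v one = laplacian a *v 0" using f1 by simp
    then have "one = 0" using injD[OF i] by blast
    then show False using one0 by simp
  qed
  have "dim (range f) < DIM(real^'n)"
  proof -
    have r: "rank (laplacian a) = dim (range f)" unfolding f_def by (rule rank_dim_range)
    have "rank (laplacian a) \<noteq> CARD('n)" using ninj by (simp add: full_rank_injective)
    moreover have "rank (laplacian a) \<le> CARD('n)" using rank_bound[of "laplacian a"] by simp
    ultimately show ?thesis using r by simp
  qed
  then have "\<exists>v::real^'n. v \<noteq> 0 \<and> span (range f) \<subseteq> {x. v \<bullet> x = 0}"
    by (rule lowdim_subset_hyperplane)
  then obtain v :: "real^'n" where v0: "v \<noteq> 0" and vs: "span (range f) \<subseteq> {x. v \<bullet> x = 0}"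
    by blast
  have vx: "v \<bullet> f x = 0" for x
  proof -
    have "f x \<in> span (range f)" by (simp add: span_base)
    then show ?thesis using vs by blast
  qed
  have vl: "v v* laplacian a = 0"
  proof -
    have "(v v* laplacian a) \<bullet> (v v* laplacian a) = v \<bullet> (laplacian a *v (v v* laplacian a))"
      by (simp add: dot_lmul_matrix)
    also have "\<dots> = 0" using vx by (simp add: f_def)
    finally show ?thesis by simp
  qed
  define D where "D j = (\<Sum>k\<in>UNIV. Aof a j k)" for j
  have A0: "0 \<le> Aof a i j" for i j using Aof_nonneg[OF nn] .
  have D0: "0 \<le> D j" for j unfolding D_def using A0 by (simp add: sum_nonneg)
  have E: "v$j * D j = (\<Sum>i\<in>UNIV. v$i * Aof a i j)" for j
  proof -
    have "(v v* laplacian a)$j = 0" using vl by simp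
    then show ?thesis unfolding lap_vm D_def by simp
  qed
  have ineq: "\<bar>v$j\<bar> * D j \<le> (\<Sum>i\<in>UNIV. \<bar>v$i\<bar> * Aof a i j)" for j
  proof -
    have "\<bar>v$j\<bar> * D j = \<bar>v$j * D j\<bar>" using D0 by (simp add: abs_mult)
    also have "\<dots> = \<bar>\<Sum>i\<in>UNIV. v$i * Aof a i j\<bar>" by (simp only: E)
    also have "\<dots> \<le> (\<Sum>i\<in>UNIV. \<bar>v$i * Aof a i j\<bar>)" by (rule sum_abs)
    also have "\<dots> = (\<Sum>i\<in>UNIV. \<bar>v$i\<bar> * Aof a i j)" using A0 by (simp add: abs_mult)
    finally show ?thesis .
  qed
  have tot: "(\<Sum>j\<in>UNIV. \<Sum>i\<in>UNIV. \<bar>v$i\<bar> * Aof a i j) = (\<Sum>j\<in>UNIV. \<bar>v$j\<bar> * D j)"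
    unfolding D_def sum_distrib_left by (rule sum.swap)
  have "(\<Sum>j\<in>UNIV. (\<Sum>i\<in>UNIV. \<bar>v$i\<bar> * Aof a i j) - \<bar>v$j\<bar> * D j) = 0"
    using tot by (simp add: sum_subtractf)
  then have eqj: "\<forall>j\<in>UNIV. (\<Sum>i\<in>UNIV. \<bar>v$i\<bar> * Aof a i j) - \<bar>v$j\<bar> * D j = 0"
    using ineq by (subst sum_nonneg_eq_0_iff[symmetric]) auto
  define w :: "real^'n" where "w = (\<chi> i. \<bar>v$i\<bar>)"
  have w0: "w \<noteq> 0" using v0 by (simp add: w_def vec_eq_iff)
  define \<gamma> where "\<gamma> = (1 / norm w) *\<^sub>R w"
  have "\<gamma> v* laplacian a = 0"
  proof -
    have "(\<gamma> v* laplacian a) $ j = 0" for j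
    proof -
      have "(\<gamma> v* laplacian a) $ j = \<gamma>$j * D j - (\<Sum>i\<in>UNIV. \<gamma>$i * Aof a i j)"
        unfolding lap_vm D_def by simp
      also have "\<dots> = (1 / norm w) * (\<bar>v$j\<bar> * D j) - (\<Sum>i\<in>UNIV. (1 / norm w) * (\<bar>v$i\<bar> * Aof a i j))"
        by (simp add: \<gamma>_def w_def mult.assoc)
      also have "\<dots> = (1 / norm w) * (\<bar>v$j\<bar> * D j - (\<Sum>i\<in>UNIV. \<bar>v$i\<bar> * Aof a i j))"
        by (simp only: sum_distrib_left[symmetric] right_diff_distrib)
      finally have "(\<gamma> v* laplacian a) $ j = (1 / norm w) * (\<bar>v$j\<bar> * D j - (\<Sum>i\<in>UNIV. \<bar>v$i\<bar> * Aof a i j))" .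
      then show ?thesis using eqj by simp
    qed
    then show ?thesis by (simp add: vec_eq_iff)
  qed
  moreover have "norm \<gamma> = 1"
  proof -
    have nw: "norm w > 0" using w0 by simp
    have "norm \<gamma> = \<bar>1 / norm w\<bar> * norm w" unfolding \<gamma>_def by (rule norm_scaleR)
    also have "\<dots> = 1" using nw by simp
    finally show ?thesis .
  qed
  moreover have "\<forall>i. 0 \<le> \<gamma> $ i" by (simp add: \<gamma>_def w_def)
  ultimately show ?thesis unfolding normalized_left_null_def by blast
qed



lemma split_R: "(\<Sum>k\<in>UNIV. f k) = (\<Sum>k\<in>R. f k) + (\<Sum>k\<in>-R. f k)" for f :: "'n::finite \<Rightarrow> real"
proof -
  have "(\<Sum>k\<in>R \<union> -R. f k) = (\<Sum>k\<in>R. f k) + (\<Sum>k\<in>-R. f k)" by (rule sum.union_disjoint) auto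
  moreover have "R \<union> -R = UNIV" by auto
  ultimately show ?thesis by simp
qed

lemma gamma_char:
  fixes a :: "'n::finite \<Rightarrow> 'n \<Rightarrow> real"
  assumes q: "QSC a" and nn: "\<forall>i j. i \<noteq> j \<longrightarrow> 0 \<le> a i j" and g: "normalized_left_null a \<gamma>"
  shows "0 < \<gamma>$i \<longleftrightarrow> (\<forall>j. j \<noteq> i \<longrightarrow> reaches a i j)"
proof -
  have gl: "\<gamma> v* laplacian a = 0" and gn: "norm \<gamma> = 1" and gp: "\<forall>i. 0 \<le> \<gamma>$i"
    using g by (auto simp: normalized_left_null_def)
  define D where "D j = (\<Sum>k\<in>UNIV. Aof a j k)" for j
  have A0: "0 \<le> Aof a i j" for i j using Aof_nonneg[OF nn] .
  have E: "\<gamma>$j * D j = (\<Sum>i\<in>UNIV. \<gamma>$i * Aof a i j)" for j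
  proof -
    have "(\<gamma> v* laplacian a)$j = 0" using gl by simp
    then show ?thesis unfolding lap_vm D_def by simp
  qed
  have prop1: "\<gamma>$z = 0" if y0: "\<gamma>$y = 0" and e: "(y,z) \<in> edges a" for y z
  proof -
    have "(\<Sum>k\<in>UNIV. \<gamma>$k * Aof a k y) = 0" using E[of y] y0 by simp
    moreover have "\<forall>k\<in>UNIV. 0 \<le> \<gamma>$k * Aof a k y" using gp A0 by simp
    ultimately have "\<forall>k\<in>UNIV. \<gamma>$k * Aof a k y = 0" by (simp add: sum_nonneg_eq_0_iff)
    then have "\<gamma>$z * Aof a z y = 0" by simp
    moreover have "Aof a z y > 0" using edge_Aof[OF e] by simp
    ultimately show ?thesis by simp
  qed
  have propR: "\<gamma>$z = 0" if p: "(y,z) \<in> (edges a)\<^sup>*" and y0: "\<gamma>$y = 0" for y z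
    using p
  proof (induction rule: rtrancl_induct)
    case base then show ?case using y0 .
  next
    case (step z w) then show ?case using prop1 by blast
  qed
  define R where "R = {i. \<forall>j. reaches a i j}"
  have Rchar: "(i \<in> R) = (\<forall>j. j \<noteq> i \<longrightarrow> reaches a i j)" for i
  proof
    assume "i \<in> R" then show "\<forall>j. j \<noteq> i \<longrightarrow> reaches a i j" by (simp add: R_def)
  next
    assume h: "\<forall>j. j \<noteq> i \<longrightarrow> reaches a i j"
    have "reaches a i j" for j
    proof (cases "j = i")
      case True then show ?thesis by (simp add: reaches_refl)
    next
      case False then show ?thesis using h by simp
    qed
    then have "\<forall>j. reaches a i j" by blast
    then show "i \<in> R" by (simp add: R_def)
  qed
  have g0: "\<gamma> \<noteq> 0" using gn by auto
  have posR: "0 < \<gamma>$i" if iR: "i \<in> R" for i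
  proof (rule ccontr)
    assume "\<not> 0 < \<gamma>$i"
    then have z: "\<gamma>$i = 0" using gp[rule_format, of i] by simp
    have "\<gamma>$j = 0" for j
    proof -
      have "(i, j) \<in> (edges a)\<^sup>*" using iR by (simp add: R_def reaches_def)
      then show ?thesis using propR z by blast
    qed
    then have "\<gamma> = 0" by (simp add: vec_eq_iff)
    then show False using g0 by simp
  qed
  have Rcl: "j \<in> R" if iR: "i \<in> R" and e: "(j,i) \<in> edges a" for i j
  proof -
    have "reaches a j k" for k using reaches_edge[OF e] iR by (simp add: R_def)
    then have "\<forall>k. reaches a j k" by blast
    then show ?thesis by (simp add: R_def)
  qed
  have AR: "Aof a i j = 0" if "i \<in> R" "j \<notin> R" for i j
  proof (rule ccontr)
    assume "Aof a i j \<noteq> 0" then have "0 < Aof a i j" using A0[of i j] by simp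
    then have "(j,i) \<in> edges a" by (rule Aof_pos_edge)
    then show False using Rcl that by blast
  qed
  define X where "X = (\<Sum>j\<in>-R. \<Sum>i\<in>-R. \<gamma>$i * Aof a i j)"
  have h1: "(\<Sum>j\<in>-R. \<gamma>$j * D j) = X"
  proof -
    have "(\<Sum>j\<in>-R. \<gamma>$j * D j) = (\<Sum>j\<in>-R. \<Sum>i\<in>UNIV. \<gamma>$i * Aof a i j)"
      by (rule sum.cong) (auto simp: E)
    also have "\<dots> = (\<Sum>j\<in>-R. (\<Sum>i\<in>R. \<gamma>$i * Aof a i j) + (\<Sum>i\<in>-R. \<gamma>$i * Aof a i j))"
      by (rule sum.cong) (auto simp only: split_R[where R=R])
    also have "\<dots> = X" unfolding X_def
      by (rule sum.cong) (auto simp: AR)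
    finally show ?thesis .
  qed
  have h2: "(\<Sum>j\<in>-R. \<gamma>$j * D j) = (\<Sum>j\<in>-R. \<gamma>$j * (\<Sum>k\<in>R. Aof a j k)) + X"
  proof -
    have "(\<Sum>j\<in>-R. \<gamma>$j * D j) = (\<Sum>j\<in>-R. \<gamma>$j * (\<Sum>k\<in>R. Aof a j k) + \<gamma>$j * (\<Sum>k\<in>-R. Aof a j k))"
      unfolding D_def by (rule sum.cong) (auto simp only: split_R[where R=R] distrib_left)
    also have "\<dots> = (\<Sum>j\<in>-R. \<gamma>$j * (\<Sum>k\<in>R. Aof a j k)) + (\<Sum>j\<in>-R. \<Sum>k\<in>-R. \<gamma>$j * Aof a j k)"
      by (simp only: sum.distrib sum_distrib_left)
    also have "(\<Sum>j\<in>-R. \<Sum>k\<in>-R. \<gamma>$j * Aof a j k) = X" unfolding X_def by (rule sum.swap)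
    finally show ?thesis .
  qed
  have s0: "(\<Sum>j\<in>-R. \<gamma>$j * (\<Sum>k\<in>R. Aof a j k)) = 0" using h1 h2 by simp
  have nn0: "\<And>j. j \<in> -R \<Longrightarrow> 0 \<le> \<gamma>$j * (\<Sum>k\<in>R. Aof a j k)"
    using gp A0 by (simp add: sum_nonneg)
  have "((\<Sum>j\<in>-R. \<gamma>$j * (\<Sum>k\<in>R. Aof a j k)) = 0) = (\<forall>j\<in>-R. \<gamma>$j * (\<Sum>k\<in>R. Aof a j k) = 0)"
    by (rule sum_nonneg_eq_0_iff) (use nn0 in auto)
  then have z1: "\<forall>j\<in>-R. \<gamma>$j * (\<Sum>k\<in>R. Aof a j k) = 0" using s0 by blast
  have edgeR: "\<gamma>$j = 0" if jR: "j \<notin> R" and kR: "k \<in> R" and e: "(k,j) \<in> edges a" for j k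
  proof -
    have "0 < Aof a j k" using edge_Aof[OF e] by simp
    also have "Aof a j k \<le> (\<Sum>k\<in>R. Aof a j k)"
      by (rule member_le_sum) (use kR A0 in auto)
    finally have "0 < (\<Sum>k\<in>R. Aof a j k)" .
    moreover have "\<gamma>$j * (\<Sum>k\<in>R. Aof a j k) = 0" using z1 jR by simp
    ultimately show ?thesis by simp
  qed
  obtain r where r: "\<forall>j. reaches a r j" using QSC_root[OF q] by blast
  have rR: "r \<in> R" using r by (simp add: R_def)
  have all: "z \<in> R \<or> \<gamma>$z = 0" if p: "(r,z) \<in> (edges a)\<^sup>*" for z
    using p
  proof (induction rule: rtrancl_induct)
    case base then show ?case using rR by simp
  next
    case (step y z)
    show ?case
    proof (cases "z \<in> R")
      case True then show ?thesis by simp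
    next
      case False
      show ?thesis
      proof (cases "y \<in> R")
        case True then show ?thesis using edgeR[OF False True step(2)] by simp
      next
        case yF: False
        then have "\<gamma>$y = 0" using step(3) by simp
        then show ?thesis using prop1 step(2) by blast
      qed
    qed
  qed
  show ?thesis
  proof (cases "i \<in> R")
    case True then show ?thesis using posR Rchar by blast
  next
    case False
    have "(r,i) \<in> (edges a)\<^sup>*" using r by (simp add: reaches_def)
    then have "\<gamma>$i = 0" using all False by blast
    then show ?thesis using False Rchar by simp
  qed
qed

lemma not_QSC_not_sync:
  fixes a :: "'n::finite \<Rightarrow> 'n \<Rightarrow> real"
  assumes K: "K > 0" and c: "\<forall>i. c i > 0" and nn: "\<forall>i j. i \<noteq> j \<longrightarrow> 0 \<le> a i j" and nq: "\<not> QSC a"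
  shows "\<exists>g' y' \<tau>. delays_ok \<tau> \<and> \<not> globally_synchronizes g' y' c K a \<tau>"
proof -
  from nq obtain u v where uv: "\<forall>r. \<not> (reaches a r u \<and> reaches a r v)" unfolding QSC_def by blast
  define S1 where "S1 = {i. reaches a i u}"
  define S2 where "S2 = {i. reaches a i v}"
  define g' :: "'n \<Rightarrow> real \<Rightarrow> real" where "g' = (\<lambda>i _. if i \<in> S1 then 1 else 0)"
  define \<tau> :: "'n \<Rightarrow> 'n \<Rightarrow> real" where "\<tau> = (\<lambda>_ _. 0)"
  have dok: "delays_ok \<tau>" by (simp add: delays_ok_def \<tau>_def)
  have "\<not> globally_synchronizes g' (\<lambda>_. 0) c K a \<tau>"
  proof
    assume "globally_synchronizes g' (\<lambda>_. 0) c K a \<tau>"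
    then obtain \<omega> \<phi> xs where sol: "is_solution g' (\<lambda>_. 0) c K a \<tau> \<phi> xs"
      and der: "\<forall>i. \<forall>t>0. (xs i has_real_derivative \<omega>) (at t)"
      unfolding globally_synchronizes_def globally_synchronizes_to_def by blast
    define r where "r i = g' i 0 + K / c i * (\<Sum>j\<in>nbrs a i. a i j * (xs j 1 - xs i 1))" for i
    have eq: "\<omega> = r i" for i
    proof -
      have "(xs i has_real_derivative r i) (at 1)" using sol unfolding is_solution_def r_def \<tau>_def by simp
      moreover have "(xs i has_real_derivative \<omega>) (at 1)" using der by simp
      ultimately show ?thesis using DERIV_unique by blast
    qed
    have uS1: "u \<in> S1" by (simp add: S1_def reaches_refl)
    obtain i1 where i1: "i1 \<in> S1" "\<forall>k\<in>S1. xs i1 1 \<le> xs k 1"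
      using ex_argmin[of S1 "\<lambda>k. xs k 1"] uS1 by auto
    have s1: "0 \<le> (\<Sum>j\<in>nbrs a i1. a i1 j * (xs j 1 - xs i1 1))"
    proof (rule sum_nonneg)
      fix j assume j: "j \<in> nbrs a i1"
      have "reaches a j u" using reaches_edge[OF nbrs_pos(3)[OF nn j]] i1(1) by (simp add: S1_def)
      then have "xs i1 1 \<le> xs j 1" using i1(2) by (simp add: S1_def)
      then show "0 \<le> a i1 j * (xs j 1 - xs i1 1)" using nbrs_pos(1)[OF nn j] by simp
    qed
    have "1 \<le> \<omega>"
    proof -
      have "0 \<le> K / c i1 * (\<Sum>j\<in>nbrs a i1. a i1 j * (xs j 1 - xs i1 1))"
        using s1 K c by (simp add: less_imp_le)
      then show ?thesis using eq[of i1] i1(1) by (simp add: r_def g'_def)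
    qed
    have vS2: "v \<in> S2" by (simp add: S2_def reaches_refl)
    obtain i2 where i2: "i2 \<in> S2" "\<forall>k\<in>S2. xs k 1 \<le> xs i2 1"
      using ex_argmax[of S2 "\<lambda>k. xs k 1"] vS2 by auto
    have i2n: "i2 \<notin> S1" using uv i2(1) by (auto simp: S1_def S2_def)
    have s2: "(\<Sum>j\<in>nbrs a i2. a i2 j * (xs j 1 - xs i2 1)) \<le> 0"
    proof (rule sum_nonpos)
      fix j assume j: "j \<in> nbrs a i2"
      have "reaches a j v" using reaches_edge[OF nbrs_pos(3)[OF nn j]] i2(1) by (simp add: S2_def)
      then have "xs j 1 \<le> xs i2 1" using i2(2) by (simp add: S2_def)
      then show "a i2 j * (xs j 1 - xs i2 1) \<le> 0" using nbrs_pos(1)[OF nn j] by (simp add: mult_nonneg_nonpos)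
    qed
    have "\<omega> \<le> 0"
    proof -
      have "K / c i2 * (\<Sum>j\<in>nbrs a i2. a i2 j * (xs j 1 - xs i2 1)) \<le> 0"
        using s2 K c[rule_format, of i2] by (intro mult_nonneg_nonpos) simp_all
      then show ?thesis using eq[of i2] i2n by (simp add: r_def g'_def)
    qed
    with \<open>1 \<le> \<omega>\<close> show False by simp
  qed
  then show ?thesis using dok by blast
qed



definition hom :: "('n::finite \<Rightarrow> 'n \<Rightarrow> real) \<Rightarrow> ('n \<Rightarrow> real) \<Rightarrow> ('n \<Rightarrow> 'n \<Rightarrow> real) \<Rightarrow> real
    \<Rightarrow> ('n \<Rightarrow> real \<Rightarrow> real) \<Rightarrow> bool" where
  "hom a k \<tau> T u \<longleftrightarrow> (\<forall>i j. i \<noteq> j \<longrightarrow> 0 \<le> a i j) \<and> (\<forall>i. 0 < k i)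
     \<and> (\<forall>i j. i \<noteq> j \<longrightarrow> 0 \<le> \<tau> i j \<and> \<tau> i j \<le> T) \<and> 0 \<le> T
     \<and> (\<forall>i. continuous_on {-T..} (u i))
     \<and> (\<forall>i. \<forall>t>0. (u i has_real_derivative (k i * (\<Sum>j\<in>nbrs a i. a i j * (u j (t - \<tau> i j) - u i t)))) (at t))"

lemma hom_neg:
  assumes "hom a k \<tau> T u" shows "hom a k \<tau> T (\<lambda>i t. - u i t)"
proof -
  have c: "continuous_on {-T..} (\<lambda>t. - u i t)" for i
    using assms by (intro continuous_on_minus) (simp add: hom_def)
  have d: "((\<lambda>t. - u i t) has_real_derivative (k i * (\<Sum>j\<in>nbrs a i. a i j * ((- u j (t - \<tau> i j)) - (- u i t))))) (at t)"
    if "t > 0" for i t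
  proof -
    have "(u i has_real_derivative (k i * (\<Sum>j\<in>nbrs a i. a i j * (u j (t - \<tau> i j) - u i t)))) (at t)"
      using assms that by (simp add: hom_def)
    then have "((\<lambda>t. - u i t) has_real_derivative - (k i * (\<Sum>j\<in>nbrs a i. a i j * (u j (t - \<tau> i j) - u i t)))) (at t)"
      by (rule DERIV_minus)
    moreover have "- (k i * (\<Sum>j\<in>nbrs a i. a i j * (u j (t - \<tau> i j) - u i t)))
        = k i * (\<Sum>j\<in>nbrs a i. a i j * ((- u j (t - \<tau> i j)) - (- u i t)))"
    proof -
      have "(\<Sum>j\<in>nbrs a i. a i j * ((- u j (t - \<tau> i j)) - (- u i t)))
          = (\<Sum>j\<in>nbrs a i. - (a i j * (u j (t - \<tau> i j) - u i t)))"
        by (rule sum.cong) (simp_all add: algebra_simps)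
      also have "\<dots> = - (\<Sum>j\<in>nbrs a i. a i j * (u j (t - \<tau> i j) - u i t))"
        by (rule sum_negf)
      finally show ?thesis by simp
    qed
    ultimately show ?thesis by simp
  qed
  show ?thesis using assms c d unfolding hom_def by simp
qed

lemma inv_upper:
  assumes h: "hom a k \<tau> T u" and t0: "0 \<le> t0" and B: "\<forall>i. \<forall>s\<in>{t0-T..t0}. u i s \<le> B"
  shows "\<forall>i. \<forall>s\<ge>t0-T. u i s \<le> B"
proof -
  have nn: "\<forall>i j. i \<noteq> j \<longrightarrow> 0 \<le> a i j" and kp: "\<forall>i. 0 < k i"
    and tau: "\<forall>i j. i \<noteq> j \<longrightarrow> 0 \<le> \<tau> i j \<and> \<tau> i j \<le> T" and T0: "0 \<le> T"
    and cont: "\<forall>i. continuous_on {-T..} (u i)"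
    and der: "\<forall>i. \<forall>t>0. (u i has_real_derivative (k i * (\<Sum>j\<in>nbrs a i. a i j * (u j (t - \<tau> i j) - u i t)))) (at t)"
    using h by (auto simp: hom_def)
  have main: "u i0 s0 \<le> B + \<epsilon> * (1 + s0 - t0)" if \<epsilon>: "\<epsilon> > 0" and s0: "s0 \<ge> t0" for \<epsilon> s0 i0
  proof (rule ccontr)
    assume nc: "\<not> u i0 s0 \<le> B + \<epsilon> * (1 + s0 - t0)"
    define bnd where "bnd s = B + \<epsilon> * (1 + s - t0)" for s
    have bnd_mono: "bnd s \<le> bnd s'" if "s \<le> s'" for s s' using that \<epsilon> by (simp add: bnd_def)
    have bnd_cont: "continuous_on A bnd" for A unfolding bnd_def by (intro continuous_intros)
    define SS where "SS = {s. t0 \<le> s \<and> (\<exists>i. bnd s \<le> u i s)}"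
    have "s0 \<in> SS" unfolding SS_def bnd_def using nc s0 by (intro CollectI conjI exI[of _ i0]) auto
    then have ne: "SS \<noteq> {}" by auto
    have bdd: "bdd_below SS" unfolding bdd_below_def SS_def by auto
    have cl: "closed SS"
    proof -
      have eq: "SS = (\<Union>i\<in>UNIV. {t0..} \<inter> (\<lambda>s. u i s - bnd s) -` {0..})" by (auto simp: SS_def)
      have "closed ({t0..} \<inter> (\<lambda>s. u i s - bnd s) -` {0..})" for i
      proof (rule continuous_closed_preimage)
        have "continuous_on {t0..} (u i)"
          by (rule continuous_on_subset[OF cont[rule_format, of i]]) (use t0 T0 in auto)
        then show "continuous_on {t0..} (\<lambda>s. u i s - bnd s)"
          by (intro continuous_on_diff bnd_cont)
      qed auto
      then show ?thesis unfolding eq by (intro closed_UN) auto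
    qed
    define sm where "sm = Inf SS"
    have smS: "sm \<in> SS" unfolding sm_def by (rule closed_contains_Inf[OF ne bdd cl])
    have below: "s \<notin> SS" if "s < sm" for s
      using cInf_lower[OF _ bdd, of s] that by (auto simp: sm_def)
    from smS obtain i where smt0: "t0 \<le> sm" and hi: "bnd sm \<le> u i sm" by (auto simp: SS_def)
    have "sm \<noteq> t0"
    proof
      assume "sm = t0"
      then have "u i sm \<le> B" using B T0 by auto
      moreover have "B < bnd sm" using \<open>sm = t0\<close> \<epsilon> by (simp add: bnd_def)
      ultimately show False using hi by simp
    qed
    then have smgt: "t0 < sm" using smt0 by simp
    have lt: "u j s < bnd s" if "t0 \<le> s" "s < sm" for j s
      using below[OF that(2)] that(1) by (auto simp: SS_def not_le)
    have at_sm: "u j sm \<le> bnd sm" for j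
    proof (rule ccontr)
      assume "\<not> u j sm \<le> bnd sm"
      then have gt: "0 < u j sm - bnd sm" by simp
      have "(u j has_real_derivative (k j * (\<Sum>l\<in>nbrs a j. a j l * (u l (sm - \<tau> j l) - u j sm)))) (at sm)"
        using der smgt t0 by simp
      then have "isCont (u j) sm" by (rule DERIV_isCont)
      moreover have "isCont bnd sm" unfolding bnd_def by (intro continuous_intros)
      ultimately have "isCont (\<lambda>s. u j s - bnd s) sm" by (intro continuous_intros)
      then have "((\<lambda>s. u j s - bnd s) \<longlongrightarrow> u j sm - bnd sm) (at sm)" by (simp add: isCont_def)
      then have "((\<lambda>s. u j s - bnd s) \<longlongrightarrow> u j sm - bnd sm) (at_left sm)"
        by (rule tendsto_mono[OF at_within_le_at])
      then have ev1: "eventually (\<lambda>s. 0 < u j s - bnd s) (at_left sm)"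
        using gt by (rule order_tendstoD(1))
      have ev2: "eventually (\<lambda>s. s \<in> {t0<..<sm}) (at_left sm)"
        using eventually_at_left_real[OF smgt] .
      have "eventually (\<lambda>s. False) (at_left sm)"
        using ev1 ev2
      proof eventually_elim
        case (elim s)
        then show False using lt[of s j] by auto
      qed
      then show False by (simp add: trivial_limit_at_left_real)
    qed
    have le_all: "u j s \<le> bnd sm" if "t0 - T \<le> s" "s \<le> sm" for j s
    proof (cases "s \<le> t0")
      case True
      then have "u j s \<le> B" using B that by auto
      also have "B \<le> bnd sm" using \<epsilon> smt0 by (simp add: bnd_def)
      finally show ?thesis .
    next
      case False
      show ?thesis
      proof (cases "s = sm")
        case True then show ?thesis using at_sm by simp
      next
        case False
        then have "u j s < bnd s" using lt \<open>\<not> s \<le> t0\<close> that by simp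
        also have "bnd s \<le> bnd sm" using that by (intro bnd_mono)
        finally show ?thesis by simp
      qed
    qed
    have dle: "k i * (\<Sum>j\<in>nbrs a i. a i j * (u j (sm - \<tau> i j) - u i sm)) \<le> 0"
    proof -
      have "(\<Sum>j\<in>nbrs a i. a i j * (u j (sm - \<tau> i j) - u i sm)) \<le> 0"
      proof (rule sum_nonpos)
        fix j assume j: "j \<in> nbrs a i"
        have ji: "j \<noteq> i" using j by (simp add: nbrs_def)
        have "u j (sm - \<tau> i j) \<le> bnd sm"
          using tau[rule_format, of i j] ji smt0 by (intro le_all) auto
        then have "u j (sm - \<tau> i j) - u i sm \<le> 0" using hi by simp
        moreover have "0 \<le> a i j" using nn ji by auto
        ultimately show "a i j * (u j (sm - \<tau> i j) - u i sm) \<le> 0" by (simp add: mult_nonneg_nonpos)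
      qed
      then show ?thesis using kp[rule_format, of i] by (intro mult_nonneg_nonpos) simp_all
    qed
    have hd: "((\<lambda>s. u i s - bnd s) has_real_derivative
        (k i * (\<Sum>j\<in>nbrs a i. a i j * (u j (sm - \<tau> i j) - u i sm)) - \<epsilon>)) (at sm)"
    proof -
      have d1: "(u i has_real_derivative (k i * (\<Sum>j\<in>nbrs a i. a i j * (u j (sm - \<tau> i j) - u i sm)))) (at sm)"
        using der smgt t0 by simp
      have d2: "(bnd has_real_derivative \<epsilon>) (at sm)"
        unfolding bnd_def by (auto intro!: derivative_eq_intros)
      show ?thesis using DERIV_diff[OF d1 d2] by simp
    qed
    have "k i * (\<Sum>j\<in>nbrs a i. a i j * (u j (sm - \<tau> i j) - u i sm)) - \<epsilon> < 0" using dle \<epsilon> by simp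
    from DERIV_neg_dec_left[OF hd this] obtain d where d: "d > 0"
      and dd: "\<forall>h>0. h < d \<longrightarrow> u i sm - bnd sm < u i (sm - h) - bnd (sm - h)" by blast
    define hh where "hh = min (d/2) ((sm - t0)/2)"
    have hh0: "0 < hh" "hh < d" using d smgt by (auto simp: hh_def)
    have "u i sm - bnd sm < u i (sm - hh) - bnd (sm - hh)" using dd hh0 by blast
    moreover have "u i (sm - hh) < bnd (sm - hh)"
    proof (rule lt)
      have "hh \<le> (sm - t0)/2" unfolding hh_def by (rule min.cobounded2)
      then have "2 * hh \<le> sm - t0" by simp
      then show "t0 \<le> sm - hh" using smgt hh0 by simp
      show "sm - hh < sm" using hh0 by simp
    qed
    ultimately show False using hi by simp
  qed
  show ?thesis
  proof (intro allI impI)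
    fix i s assume s: "t0 - T \<le> s"
    show "u i s \<le> B"
    proof (cases "s \<le> t0")
      case True then show ?thesis using B s by auto
    next
      case False
      show ?thesis
      proof (rule ccontr)
        assume "\<not> u i s \<le> B"
        define \<epsilon> where "\<epsilon> = (u i s - B) / (2 * (1 + s - t0))"
        have pos: "0 < 1 + s - t0" using False by simp
        have \<epsilon>0: "\<epsilon> > 0" using \<open>\<not> u i s \<le> B\<close> pos by (simp add: \<epsilon>_def)
        have "u i s \<le> B + \<epsilon> * (1 + s - t0)" using main[OF \<epsilon>0, of s i] False by simp
        also have "\<epsilon> * (1 + s - t0) = (u i s - B) / 2" using pos by (simp add: \<epsilon>_def field_simps)
        finally show False using \<open>\<not> u i s \<le> B\<close> by (simp add: field_simps)
      qed
    qed
  qed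
qed

lemma inv_lower:
  assumes h: "hom a k \<tau> T u" and t0: "0 \<le> t0" and b: "\<forall>i. \<forall>s\<in>{t0-T..t0}. b \<le> u i s"
  shows "\<forall>i. \<forall>s\<ge>t0-T. b \<le> u i s"
  using inv_upper[OF hom_neg[OF h] t0, of "-b"] b by auto

lemma cmp:
  fixes w w' :: "real \<Rightarrow> real"
  assumes s01: "s0 \<le> s1" and bp: "0 < \<beta>" and wc: "continuous_on {s0..s1} w"
    and wd: "\<And>s. s0 < s \<Longrightarrow> s < s1 \<Longrightarrow> (w has_real_derivative w' s) (at s)"
    and wi: "\<And>s. s0 < s \<Longrightarrow> s < s1 \<Longrightarrow> - \<beta> * w s + g \<le> w' s"
  shows "g/\<beta> + (w s0 - g/\<beta>) * exp (- \<beta> * (s1 - s0)) \<le> w s1"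
proof -
  define h where "h s = (w s - g/\<beta>) * exp (\<beta> * s)" for s
  have "h s0 \<le> h s1"
  proof (rule DERIV_nonneg_imp_increasing_open[OF s01])
    fix s assume s: "s0 < s" "s < s1"
    have d1: "((\<lambda>s. w s - g/\<beta>) has_real_derivative (w' s - 0)) (at s)"
      by (rule DERIV_diff[OF wd[OF s] DERIV_const])
    have d2: "((\<lambda>s. exp (\<beta> * s)) has_real_derivative (exp (\<beta> * s) * (\<beta> * 1))) (at s)"
      by (rule DERIV_chain2[OF DERIV_exp DERIV_cmult[OF DERIV_ident]])
    have "(h has_real_derivative ((w' s - 0) * exp (\<beta> * s) + (exp (\<beta> * s) * (\<beta> * 1)) * (w s - g/\<beta>))) (at s)"
      unfolding h_def by (rule DERIV_mult[OF d1 d2])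
    moreover have "0 \<le> (w' s - 0) * exp (\<beta> * s) + (exp (\<beta> * s) * (\<beta> * 1)) * (w s - g/\<beta>)"
    proof -
      have "(w' s - 0) * exp (\<beta> * s) + (exp (\<beta> * s) * (\<beta> * 1)) * (w s - g/\<beta>)
          = exp (\<beta> * s) * (w' s + \<beta> * w s - g)" using bp by (simp add: field_simps)
      moreover have "0 \<le> w' s + \<beta> * w s - g" using wi[OF s] by simp
      ultimately show ?thesis by simp
    qed
    ultimately show "\<exists>y. (h has_real_derivative y) (at s) \<and> 0 \<le> y" by blast
  next
    show "continuous_on {s0..s1} h" unfolding h_def by (intro continuous_intros wc)
  qed
  then have m: "(w s0 - g/\<beta>) * exp (\<beta> * s0) * exp (- \<beta> * s1) \<le> (w s1 - g/\<beta>) * exp (\<beta> * s1) * exp (- \<beta> * s1)"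
    unfolding h_def by (intro mult_right_mono) auto
  have e1: "exp (\<beta> * s0) * exp (- \<beta> * s1) = exp (- \<beta> * (s1 - s0))"
    by (simp add: exp_add[symmetric] algebra_simps)
  have e2: "exp (\<beta> * s1) * exp (- \<beta> * s1) = 1"
    by (simp add: exp_add[symmetric])
  have l: "(w s0 - g/\<beta>) * exp (\<beta> * s0) * exp (- \<beta> * s1) = (w s0 - g/\<beta>) * exp (- \<beta> * (s1 - s0))"
    by (simp only: mult.assoc e1)
  have r: "(w s1 - g/\<beta>) * exp (\<beta> * s1) * exp (- \<beta> * s1) = w s1 - g/\<beta>"
    by (simp only: mult.assoc e2 mult_1_right)
  have "(w s0 - g/\<beta>) * exp (- \<beta> * (s1 - s0)) \<le> w s1 - g/\<beta>"
    using m unfolding l r .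
  then show ?thesis by simp
qed



definition "degr a i = (\<Sum>j\<in>nbrs a i. a i j)"
definition "betaC a k = 1 + (\<Sum>i\<in>UNIV. k i * degr a i)"
definition "rho0C a k = Min (insert 1 ((\<lambda>(j,i). k i * a i j) ` edges a))"
definition "rhoC a k = rho0C a k * (1 - exp (- betaC a k)) / betaC a k"
definition "PC a = card (edges a)"
definition "TtotC a T = (real (PC a) + 1) * (T + 1)"
definition "etaC a k T = exp (- betaC a k * TtotC a T) / 2 * rhoC a k ^ PC a"

lemma finite_edges: "finite (edges (a :: 'n::finite \<Rightarrow> 'n \<Rightarrow> real))"
  by (rule finite_subset[OF subset_UNIV]) simp

lemma path_bound:
  fixes a :: "'n::finite \<Rightarrow> 'n \<Rightarrow> real"
  assumes "reaches a r i" shows "\<exists>p\<le>PC a. (r, i) \<in> (edges a) ^^ p"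
proof -
  have "(r, i) \<in> (edges a)\<^sup>*" using assms by (simp add: reaches_def)
  then have "r = i \<or> (r, i) \<in> (edges a)\<^sup>+" by (auto simp: rtrancl_eq_or_trancl)
  then show ?thesis
  proof
    assume "r = i" then show ?thesis by (intro exI[of _ 0]) simp
  next
    assume "(r, i) \<in> (edges a)\<^sup>+"
    then show ?thesis unfolding trancl_finite_eq_relpow[OF finite_edges] PC_def by auto
  qed
qed

lemma hom_facts:
  assumes "hom a k \<tau> T u"
  shows "\<forall>i j. i \<noteq> j \<longrightarrow> 0 \<le> a i j" "\<forall>i. 0 < k i"
    "\<forall>i j. i \<noteq> j \<longrightarrow> 0 \<le> \<tau> i j \<and> \<tau> i j \<le> T" "0 \<le> T"
    "\<forall>i. continuous_on {-T..} (u i)"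
    "\<forall>i. \<forall>t>0. (u i has_real_derivative (k i * (\<Sum>j\<in>nbrs a i. a i j * (u j (t - \<tau> i j) - u i t)))) (at t)"
  using assms by (auto simp: hom_def)

lemma degr_nonneg: "\<forall>i j. i \<noteq> j \<longrightarrow> 0 \<le> a i j \<Longrightarrow> 0 \<le> degr a i"
  unfolding degr_def by (rule sum_nonneg) (auto simp: nbrs_def)

lemma beta_facts:
  fixes a :: "'n::finite \<Rightarrow> 'n \<Rightarrow> real"
  assumes nn: "\<forall>i j. i \<noteq> j \<longrightarrow> 0 \<le> a i j" and kp: "\<forall>i. 0 < k i"
  shows "1 \<le> betaC a k" "k i * degr a i \<le> betaC a k"
proof -
  have t: "0 \<le> k i * degr a i" for i using kp degr_nonneg[OF nn, of i] by (simp add: less_imp_le)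
  have s: "0 \<le> (\<Sum>i\<in>UNIV. k i * degr a i)" using t by (simp add: sum_nonneg)
  then show "1 \<le> betaC a k" by (simp add: betaC_def)
  have "k i * degr a i \<le> (\<Sum>i\<in>UNIV. k i * degr a i)" by (rule member_le_sum) (use t in auto)
  then show "k i * degr a i \<le> betaC a k" by (simp add: betaC_def)
qed

lemma rho0_facts:
  fixes a :: "'n::finite \<Rightarrow> 'n \<Rightarrow> real"
  assumes nn: "\<forall>i j. i \<noteq> j \<longrightarrow> 0 \<le> a i j" and kp: "\<forall>i. 0 < k i"
  shows "0 < rho0C a k" "rho0C a k \<le> 1" "(j, i) \<in> edges a \<Longrightarrow> rho0C a k \<le> k i * a i j"
proof -
  define Q where "Q = insert 1 ((\<lambda>(j,i). k i * a i j) ` edges a)"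
  have fQ: "finite Q" unfolding Q_def using finite_edges by simp
  have pos: "\<forall>x\<in>Q. 0 < x"
    using kp by (auto simp: Q_def edges_def)
  have "Min Q \<in> Q" by (rule Min_in[OF fQ]) (simp add: Q_def)
  then show "0 < rho0C a k" using pos by (simp add: rho0C_def Q_def)
  show "rho0C a k \<le> 1" unfolding rho0C_def using fQ by (simp add: Q_def)
  assume e: "(j, i) \<in> edges a"
  have "k i * a i j \<in> Q" unfolding Q_def using e by force
  then show "rho0C a k \<le> k i * a i j" unfolding rho0C_def using fQ by (simp add: Q_def)
qed

lemma rho_facts:
  fixes a :: "'n::finite \<Rightarrow> 'n \<Rightarrow> real"
  assumes nn: "\<forall>i j. i \<noteq> j \<longrightarrow> 0 \<le> a i j" and kp: "\<forall>i. 0 < k i"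
  shows "0 < rhoC a k" "rhoC a k \<le> 1"
proof -
  have b1: "1 \<le> betaC a k" using beta_facts[OF nn kp] by simp
  have e1: "exp (- betaC a k) < 1" using b1 by simp
  have e0: "0 < exp (- betaC a k)" by simp
  have r0: "0 < rho0C a k" "rho0C a k \<le> 1" using rho0_facts[OF nn kp] by auto
  show "0 < rhoC a k" unfolding rhoC_def using b1 e1 r0 by simp
  have "rho0C a k * (1 - exp (- betaC a k)) \<le> 1 * 1"
    using r0 e0 e1 by (intro mult_mono) auto
  also have "\<dots> \<le> betaC a k" using b1 by simp
  finally show "rhoC a k \<le> 1" unfolding rhoC_def using b1 by simp
qed

lemma w_deriv:
  assumes h: "hom a k \<tau> T u" and s: "0 < s"
  shows "((\<lambda>s. B - u i s) has_real_derivative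
     (k i * (\<Sum>l\<in>nbrs a i. a i l * (B - u l (s - \<tau> i l))) - k i * degr a i * (B - u i s))) (at s)"
proof -
  have d: "(u i has_real_derivative (k i * (\<Sum>j\<in>nbrs a i. a i j * (u j (s - \<tau> i j) - u i s)))) (at s)"
    using hom_facts(6)[OF h] s by simp
  have e: "- (k i * (\<Sum>j\<in>nbrs a i. a i j * (u j (s - \<tau> i j) - u i s)))
     = k i * (\<Sum>l\<in>nbrs a i. a i l * (B - u l (s - \<tau> i l))) - k i * degr a i * (B - u i s)"
  proof -
    have "(\<Sum>l\<in>nbrs a i. a i l * (B - u l (s - \<tau> i l))) - degr a i * (B - u i s)
        = (\<Sum>l\<in>nbrs a i. a i l * (B - u l (s - \<tau> i l)) - a i l * (B - u i s))"
      by (simp add: degr_def sum_distrib_right sum_subtractf)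
    also have "\<dots> = - (\<Sum>j\<in>nbrs a i. a i j * (u j (s - \<tau> i j) - u i s))"
      unfolding sum_negf[symmetric] by (rule sum.cong) (simp_all add: algebra_simps)
    finally have eq: "(\<Sum>l\<in>nbrs a i. a i l * (B - u l (s - \<tau> i l))) - degr a i * (B - u i s)
        = - (\<Sum>j\<in>nbrs a i. a i j * (u j (s - \<tau> i j) - u i s))" .
    have "k i * ((\<Sum>l\<in>nbrs a i. a i l * (B - u l (s - \<tau> i l))) - degr a i * (B - u i s))
        = - (k i * (\<Sum>j\<in>nbrs a i. a i j * (u j (s - \<tau> i j) - u i s)))"
      unfolding eq by simp
    then show ?thesis by (simp add: right_diff_distrib mult.assoc)
  qed
  show ?thesis using DERIV_diff[OF DERIV_const[of B] d] unfolding e[symmetric] by simp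
qed

lemma w_low:
  fixes a :: "'n::finite \<Rightarrow> 'n \<Rightarrow> real"
  assumes h: "hom a k \<tau> T u" and ub: "\<forall>l. \<forall>s\<ge>t0-T. u l s \<le> B" and s: "t0 \<le> s"
    and j: "j \<in> nbrs a i"
  shows "- betaC a k * (B - u i s) + k i * a i j * (B - u j (s - \<tau> i j))
     \<le> k i * (\<Sum>l\<in>nbrs a i. a i l * (B - u l (s - \<tau> i l))) - k i * degr a i * (B - u i s)"
proof -
  have nn: "\<forall>i j. i \<noteq> j \<longrightarrow> 0 \<le> a i j" and kp: "\<forall>i. 0 < k i"
    and tau: "\<forall>i j. i \<noteq> j \<longrightarrow> 0 \<le> \<tau> i j \<and> \<tau> i j \<le> T"
    using hom_facts[OF h] by auto
  have term0: "0 \<le> a i l * (B - u l (s - \<tau> i l))" if l: "l \<in> nbrs a i" for l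
  proof -
    have li: "l \<noteq> i" using l by (simp add: nbrs_def)
    have "u l (s - \<tau> i l) \<le> B" using ub tau[rule_format, of i l] li s by auto
    moreover have "0 \<le> a i l" using nn li by auto
    ultimately show ?thesis by simp
  qed
  have "a i j * (B - u j (s - \<tau> i j)) \<le> (\<Sum>l\<in>nbrs a i. a i l * (B - u l (s - \<tau> i l)))"
    by (rule member_le_sum) (use j term0 in auto)
  then have A: "k i * (a i j * (B - u j (s - \<tau> i j))) \<le> k i * (\<Sum>l\<in>nbrs a i. a i l * (B - u l (s - \<tau> i l)))"
    using kp by (intro mult_left_mono) (auto simp: less_imp_le)
  have w0: "0 \<le> B - u i s" using ub s hom_facts(4)[OF h] by auto
  have "k i * degr a i * (B - u i s) \<le> betaC a k * (B - u i s)"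
    using beta_facts(2)[OF nn kp, of i] w0 by (intro mult_right_mono) auto
  then show ?thesis using A by (simp add: mult.assoc)
qed

lemma w_low0:
  fixes a :: "'n::finite \<Rightarrow> 'n \<Rightarrow> real"
  assumes h: "hom a k \<tau> T u" and ub: "\<forall>l. \<forall>s\<ge>t0-T. u l s \<le> B" and s: "t0 \<le> s"
  shows "- betaC a k * (B - u i s)
     \<le> k i * (\<Sum>l\<in>nbrs a i. a i l * (B - u l (s - \<tau> i l))) - k i * degr a i * (B - u i s)"
proof -
  have nn: "\<forall>i j. i \<noteq> j \<longrightarrow> 0 \<le> a i j" and kp: "\<forall>i. 0 < k i"
    and tau: "\<forall>i j. i \<noteq> j \<longrightarrow> 0 \<le> \<tau> i j \<and> \<tau> i j \<le> T"
    using hom_facts[OF h] by auto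
  have term0: "0 \<le> a i l * (B - u l (s - \<tau> i l))" if l: "l \<in> nbrs a i" for l
  proof -
    have li: "l \<noteq> i" using l by (simp add: nbrs_def)
    have "u l (s - \<tau> i l) \<le> B" using ub tau[rule_format, of i l] li s by auto
    moreover have "0 \<le> a i l" using nn li by auto
    ultimately show ?thesis by simp
  qed
  have "0 \<le> (\<Sum>l\<in>nbrs a i. a i l * (B - u l (s - \<tau> i l)))" by (rule sum_nonneg) (use term0 in auto)
  then have A: "0 \<le> k i * (\<Sum>l\<in>nbrs a i. a i l * (B - u l (s - \<tau> i l)))"
    using kp by (simp add: less_imp_le)
  have w0: "0 \<le> B - u i s" using ub s hom_facts(4)[OF h] by auto
  have "k i * degr a i * (B - u i s) \<le> betaC a k * (B - u i s)"
    using beta_facts(2)[OF nn kp, of i] w0 by (intro mult_right_mono) auto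
  then show ?thesis using A by simp
qed



lemma upper_contract:
  fixes a :: "'n::finite \<Rightarrow> 'n \<Rightarrow> real"
  assumes h: "hom a k \<tau> T u" and t0: "0 \<le> t0"
    and bnds: "\<forall>i. \<forall>s\<in>{t0-T..t0}. b \<le> u i s \<and> u i s \<le> B"
    and r: "\<forall>j. reaches a r j" and ur: "u r t0 \<le> (B + b)/2"
  shows "\<forall>i. \<forall>s\<in>{t0 + TtotC a T - T .. t0 + TtotC a T}. u i s \<le> B - etaC a k T * (B - b)"
proof -
  have nn: "\<forall>i j. i \<noteq> j \<longrightarrow> 0 \<le> a i j" and kp: "\<forall>i. 0 < k i"
    and tau: "\<forall>i j. i \<noteq> j \<longrightarrow> 0 \<le> \<tau> i j \<and> \<tau> i j \<le> T" and T0: "0 \<le> T"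
    and cont: "\<forall>i. continuous_on {-T..} (u i)"
    using hom_facts[OF h] by auto
  have ub: "\<forall>l. \<forall>s\<ge>t0-T. u l s \<le> B" using inv_upper[OF h t0] bnds by auto
  have lb: "\<forall>l. \<forall>s\<ge>t0-T. b \<le> u l s" using inv_lower[OF h t0] bnds by auto
  have Bb: "b \<le> B" using ub lb T0 by (metis diff_ge_0_iff_ge diff_le_eq order.trans le_add_same_cancel1)
  define \<beta> where "\<beta> = betaC a k"
  define \<rho> where "\<rho> = rhoC a k"
  define \<rho>0 where "\<rho>0 = rho0C a k"
  define Tt where "Tt = TtotC a T"
  define P where "P = PC a"
  define \<delta>0 where "\<delta>0 = exp (- \<beta> * Tt) / 2"
  have \<beta>1: "1 \<le> \<beta>" using beta_facts(1)[OF nn kp] by (simp add: \<beta>_def)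
  have \<beta>0: "0 < \<beta>" using \<beta>1 by simp
  have \<rho>01: "0 < \<rho>0" using rho0_facts(1)[OF nn kp] by (simp add: \<rho>0_def)
  have \<rho>1: "0 < \<rho>" "\<rho> \<le> 1" using rho_facts[OF nn kp] by (auto simp: \<rho>_def)
  have Tt_eq: "Tt = real P * (T + 1) + T + 1" by (simp add: Tt_def TtotC_def P_def algebra_simps)
  have \<delta>00: "0 \<le> \<delta>0" by (simp add: \<delta>0_def)
  have wc: "continuous_on {s0..s1} (\<lambda>s. B - u i s)" if "t0 \<le> s0" for s0 s1 i
  proof -
    have "continuous_on {s0..s1} (u i)"
      by (rule continuous_on_subset[OF cont[rule_format, of i]]) (use that t0 T0 in auto)
    then show ?thesis by (intro continuous_on_diff continuous_on_const)
  qed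
  define W' where "W' i s = k i * (\<Sum>l\<in>nbrs a i. a i l * (B - u l (s - \<tau> i l))) - k i * degr a i * (B - u i s)" for i s
  have wd: "((\<lambda>s. B - u i s) has_real_derivative W' i s) (at s)" if "0 < s" for i s
    unfolding W'_def by (rule w_deriv[OF h that])
  have base: "\<delta>0 * (B - b) \<le> B - u r s" if s: "t0 \<le> s" "s \<le> t0 + Tt" for s
  proof -
    have c: "0/\<beta> + ((B - u r t0) - 0/\<beta>) * exp (- \<beta> * (s - t0)) \<le> B - u r s"
    proof (rule cmp[where w' = "W' r" and g = 0])
      show "t0 \<le> s" using s by simp
      show "0 < \<beta>" by (rule \<beta>0)
      show "continuous_on {t0..s} (\<lambda>s. B - u r s)" by (rule wc) simp
      fix s' assume s': "t0 < s'" "s' < s"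
      then show "((\<lambda>s. B - u r s) has_real_derivative W' r s') (at s')" using t0 by (intro wd) simp
      show "- \<beta> * (B - u r s') + 0 \<le> W' r s'"
        using w_low0[OF h ub, of s' r] s' unfolding W'_def \<beta>_def by simp
    qed
    have e1: "exp (- \<beta> * Tt) \<le> exp (- \<beta> * (s - t0))"
      using s \<beta>0 by (simp add: mult_left_mono)
    have h1: "(B - b) / 2 \<le> B - u r t0" using ur by (simp add: field_simps)
    have "\<delta>0 * (B - b) = ((B - b) / 2) * exp (- \<beta> * Tt)" by (simp add: \<delta>0_def)
    also have "\<dots> \<le> (B - u r t0) * exp (- \<beta> * (s - t0))"
      using h1 e1 Bb by (intro mult_mono) auto
    also have "\<dots> \<le> B - u r s" using c by simp
    finally show ?thesis .
  qed
  have step: "u i s \<le> B - \<rho> * \<delta> * (B - b)"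
    if e: "(j,i) \<in> edges a" and dl: "0 \<le> \<delta>" and S: "t0 \<le> S"
      and uj: "\<forall>s'\<in>{S..t0+Tt}. u j s' \<le> B - \<delta> * (B - b)"
      and s: "S + T + 1 \<le> s" "s \<le> t0 + Tt" for i j \<delta> S s
  proof -
    have jn: "j \<in> nbrs a i" using e by (rule edge_nbrs)
    have ji: "j \<noteq> i" using e by (auto simp: edges_def)
    define g where "g = \<rho>0 * \<delta> * (B - b)"
    have g0: "0 \<le> g" using \<rho>01 dl Bb by (simp add: g_def)
    have c: "g/\<beta> + ((B - u i (S + T)) - g/\<beta>) * exp (- \<beta> * (s - (S + T))) \<le> B - u i s"
    proof (rule cmp[where w' = "W' i" and g = g])
      show "S + T \<le> s" using s by simp
      show "0 < \<beta>" by (rule \<beta>0)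
      show "continuous_on {S + T..s} (\<lambda>s. B - u i s)" by (rule wc) (use S T0 in simp)
      fix s' assume s': "S + T < s'" "s' < s"
      then show "((\<lambda>s. B - u i s) has_real_derivative W' i s') (at s')" using t0 S T0 by (intro wd) simp
      have s't0: "t0 \<le> s'" using s' S T0 by simp
      have low: "- \<beta> * (B - u i s') + k i * a i j * (B - u j (s' - \<tau> i j)) \<le> W' i s'"
        using w_low[OF h ub s't0 jn] unfolding W'_def \<beta>_def by simp
      have tij: "0 \<le> \<tau> i j" "\<tau> i j \<le> T" using tau ji by auto
      have "s' - \<tau> i j \<in> {S..t0+Tt}" using s' s tij by simp
      then have "u j (s' - \<tau> i j) \<le> B - \<delta> * (B - b)" using uj by blast
      then have "\<delta> * (B - b) \<le> B - u j (s' - \<tau> i j)" by simp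
      moreover have "\<rho>0 \<le> k i * a i j" using rho0_facts(3)[OF nn kp e] by (simp add: \<rho>0_def)
      ultimately have "\<rho>0 * (\<delta> * (B - b)) \<le> k i * a i j * (B - u j (s' - \<tau> i j))"
        using \<rho>01 dl Bb by (intro mult_mono) auto
      then show "- \<beta> * (B - u i s') + g \<le> W' i s'" using low by (simp add: g_def mult.assoc)
    qed
    have X0: "0 \<le> B - u i (S + T)" using ub S T0 by simp
    define E where "E = exp (- \<beta> * (s - (S + T)))"
    have E1: "E \<le> exp (- \<beta>)"
    proof -
      have "\<beta> * 1 \<le> \<beta> * (s - (S + T))" using s \<beta>0 by (intro mult_left_mono) auto
      then show ?thesis by (simp add: E_def)
    qed
    have E0: "0 \<le> E" by (simp add: E_def)
    have "g / \<beta> * (1 - exp (- \<beta>)) \<le> g / \<beta> * (1 - E)"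
      using E1 g0 \<beta>0 by (intro mult_left_mono) auto
    also have "\<dots> \<le> g/\<beta> + ((B - u i (S + T)) - g/\<beta>) * E"
    proof -
      have "g/\<beta> + ((B - u i (S + T)) - g/\<beta>) * E = g / \<beta> * (1 - E) + (B - u i (S + T)) * E"
        using \<beta>0 by (simp add: field_simps)
      moreover have "0 \<le> (B - u i (S + T)) * E" using X0 E0 by simp
      ultimately show ?thesis by simp
    qed
    also have "\<dots> \<le> B - u i s" using c by (simp add: E_def)
    finally have "g / \<beta> * (1 - exp (- \<beta>)) \<le> B - u i s" .
    moreover have "\<rho> * \<delta> * (B - b) = g / \<beta> * (1 - exp (- \<beta>))"
      by (simp add: \<rho>_def rhoC_def g_def \<beta>_def \<rho>0_def)
    ultimately show ?thesis by simp
  qed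
  have ind: "\<forall>i. (r,i) \<in> (edges a)^^p \<longrightarrow>
      (\<forall>s\<in>{t0 + real p * (T+1) .. t0 + Tt}. u i s \<le> B - \<delta>0 * \<rho>^p * (B - b))" for p
  proof (induction p)
    case 0
    show ?case
    proof (intro allI impI ballI)
      fix i s assume "(r, i) \<in> (edges a)^^0" and s: "s \<in> {t0 + real 0 * (T+1) .. t0 + Tt}"
      then have "i = r" by simp
      moreover have "\<delta>0 * (B - b) \<le> B - u r s" using s by (intro base) auto
      ultimately show "u i s \<le> B - \<delta>0 * \<rho>^0 * (B - b)" by simp
    qed
  next
    case (Suc p)
    show ?case
    proof (intro allI impI ballI)
      fix i s assume ri: "(r, i) \<in> (edges a)^^Suc p" and s: "s \<in> {t0 + real (Suc p) * (T+1) .. t0 + Tt}"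
      from ri obtain y where ry: "(r, y) \<in> (edges a)^^p" and yi: "(y, i) \<in> edges a"
        by (rule relpow_Suc_E)
      have uy: "\<forall>s'\<in>{t0 + real p * (T+1) .. t0 + Tt}. u y s' \<le> B - (\<delta>0 * \<rho>^p) * (B - b)"
        using Suc ry by simp
      have dl: "0 \<le> \<delta>0 * \<rho>^p" using \<delta>00 \<rho>1 by simp
      have S0: "t0 \<le> t0 + real p * (T+1)" using T0 by simp
      have "u i s \<le> B - \<rho> * (\<delta>0 * \<rho>^p) * (B - b)"
        by (rule step[OF yi dl S0 uy]) (use s in \<open>auto simp: algebra_simps\<close>)
      then show "u i s \<le> B - \<delta>0 * \<rho>^Suc p * (B - b)" by (simp add: algebra_simps)
    qed
  qed
  show ?thesis
  proof (intro allI ballI)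
    fix i s assume s: "s \<in> {t0 + TtotC a T - T .. t0 + TtotC a T}"
    obtain p where pP: "p \<le> P" and rp: "(r, i) \<in> (edges a)^^p"
      using path_bound[OF r[rule_format, of i]] by (auto simp: P_def)
    have pp: "real p * (T + 1) \<le> real P * (T + 1)" using pP T0 by (intro mult_right_mono) auto
    have s1: "t0 + TtotC a T - T \<le> s" "s \<le> t0 + TtotC a T" using s by auto
    have "t0 + real p * (T+1) \<le> s" using pp s1(1) Tt_eq T0 unfolding Tt_def by linarith
    then have "s \<in> {t0 + real p * (T+1) .. t0 + Tt}" using s1(2) by (simp add: Tt_def)
    then have "u i s \<le> B - \<delta>0 * \<rho>^p * (B - b)" using ind rp by blast
    moreover have "\<rho>^P \<le> \<rho>^p" using pP \<rho>1 by (intro power_decreasing) auto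
    then have "\<delta>0 * \<rho>^P * (B - b) \<le> \<delta>0 * \<rho>^p * (B - b)"
      using \<delta>00 Bb by (intro mult_right_mono mult_left_mono) auto
    moreover have "etaC a k T = \<delta>0 * \<rho>^P"
      by (simp add: etaC_def \<delta>0_def \<beta>_def Tt_def \<rho>_def P_def)
    ultimately show "u i s \<le> B - etaC a k T * (B - b)" by simp
  qed
qed



lemma lower_contract:
  fixes a :: "'n::finite \<Rightarrow> 'n \<Rightarrow> real"
  assumes h: "hom a k \<tau> T u" and t0: "0 \<le> t0"
    and bnds: "\<forall>i. \<forall>s\<in>{t0-T..t0}. b \<le> u i s \<and> u i s \<le> B"
    and r: "\<forall>j. reaches a r j" and ur: "(B + b)/2 \<le> u r t0"
  shows "\<forall>i. \<forall>s\<in>{t0 + TtotC a T - T .. t0 + TtotC a T}. b + etaC a k T * (B - b) \<le> u i s"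
proof -
  have b2: "\<forall>i. \<forall>s\<in>{t0-T..t0}. - B \<le> - u i s \<and> - u i s \<le> - b" using bnds by auto
  have ur2: "- u r t0 \<le> (- b + - B)/2" using ur by (simp add: field_simps)
  have "\<forall>i. \<forall>s\<in>{t0 + TtotC a T - T .. t0 + TtotC a T}. - u i s \<le> - b - etaC a k T * (- b - - B)"
    by (rule upper_contract[OF hom_neg[OF h] t0 b2 r ur2])
  then show ?thesis by (auto simp: algebra_simps)
qed

lemma eta_facts:
  fixes a :: "'n::finite \<Rightarrow> 'n \<Rightarrow> real"
  assumes nn: "\<forall>i j. i \<noteq> j \<longrightarrow> 0 \<le> a i j" and kp: "\<forall>i. 0 < k i" and T0: "0 \<le> T"
  shows "0 < etaC a k T" "etaC a k T \<le> 1/2" "1 \<le> TtotC a T"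
proof -
  have \<beta>1: "1 \<le> betaC a k" using beta_facts(1)[OF nn kp] .
  have \<rho>: "0 < rhoC a k" "rhoC a k \<le> 1" using rho_facts[OF nn kp] by auto
  have Tt: "1 \<le> TtotC a T"
  proof -
    have "1 * 1 \<le> (real (PC a) + 1) * (T + 1)" using T0 by (intro mult_mono) auto
    then show ?thesis by (simp add: TtotC_def)
  qed
  then show "1 \<le> TtotC a T" .
  show "0 < etaC a k T" using \<rho> by (simp add: etaC_def)
  have e: "exp (- betaC a k * TtotC a T) \<le> 1" using \<beta>1 Tt by simp
  have p: "rhoC a k ^ PC a \<le> 1" using \<rho> by (simp add: power_le_one)
  have "exp (- betaC a k * TtotC a T) * rhoC a k ^ PC a \<le> 1 * 1"
    using e p \<rho> by (intro mult_mono) auto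
  then show "etaC a k T \<le> 1/2" by (simp add: etaC_def)
qed

lemma contract_step:
  fixes a :: "'n::finite \<Rightarrow> 'n \<Rightarrow> real"
  assumes h: "hom a k \<tau> T u" and t0: "0 \<le> t0"
    and bnds: "\<forall>i. \<forall>s\<in>{t0-T..t0}. b \<le> u i s \<and> u i s \<le> B"
    and r: "\<forall>j. reaches a r j"
  shows "\<exists>b' B'. B' - b' \<le> (1 - etaC a k T) * (B - b) \<and>
     (\<forall>i. \<forall>s\<in>{t0 + TtotC a T - T .. t0 + TtotC a T}. b' \<le> u i s \<and> u i s \<le> B')"
proof -
  have T0: "0 \<le> T" using hom_facts(4)[OF h] .
  have nn: "\<forall>i j. i \<noteq> j \<longrightarrow> 0 \<le> a i j" and kp: "\<forall>i. 0 < k i" using hom_facts[OF h] by auto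
  have Tt: "1 \<le> TtotC a T" using eta_facts[OF nn kp T0] by simp
  have ub: "\<forall>l. \<forall>s\<ge>t0-T. u l s \<le> B" using inv_upper[OF h t0] bnds by auto
  have lb: "\<forall>l. \<forall>s\<ge>t0-T. b \<le> u l s" using inv_lower[OF h t0] bnds by auto
  have win: "t0 - T \<le> s" if "s \<in> {t0 + TtotC a T - T .. t0 + TtotC a T}" for s
    using that Tt by simp
  show ?thesis
  proof (cases "u r t0 \<le> (B + b)/2")
    case True
    have "\<forall>i. \<forall>s\<in>{t0 + TtotC a T - T .. t0 + TtotC a T}. u i s \<le> B - etaC a k T * (B - b)"
      by (rule upper_contract[OF h t0 bnds r True])
    then show ?thesis using lb win
      by (intro exI[of _ b] exI[of _ "B - etaC a k T * (B - b)"]) (auto simp: algebra_simps)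
  next
    case False
    then have F: "(B + b)/2 \<le> u r t0" by simp
    have "\<forall>i. \<forall>s\<in>{t0 + TtotC a T - T .. t0 + TtotC a T}. b + etaC a k T * (B - b) \<le> u i s"
      by (rule lower_contract[OF h t0 bnds r F])
    then show ?thesis using ub win
      by (intro exI[of _ "b + etaC a k T * (B - b)"] exI[of _ B]) (auto simp: algebra_simps)
  qed
qed

lemma hom_conv:
  fixes a :: "'n::finite \<Rightarrow> 'n \<Rightarrow> real"
  assumes h: "hom a k \<tau> T u" and r: "\<forall>j. reaches a r j" and \<epsilon>: "0 < \<epsilon>"
  shows "\<exists>S. \<forall>i j s s'. S \<le> s \<longrightarrow> S \<le> s' \<longrightarrow> \<bar>u i s - u j s'\<bar> \<le> \<epsilon>"
proof -
  have T0: "0 \<le> T" using hom_facts(4)[OF h] .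
  have nn: "\<forall>i j. i \<noteq> j \<longrightarrow> 0 \<le> a i j" and kp: "\<forall>i. 0 < k i"
    and cont: "\<forall>i. continuous_on {-T..} (u i)" using hom_facts[OF h] by auto
  define \<eta> where "\<eta> = etaC a k T"
  define Tt where "Tt = TtotC a T"
  have \<eta>: "0 < \<eta>" "\<eta> \<le> 1/2" using eta_facts[OF nn kp T0] by (auto simp: \<eta>_def)
  have Tt1: "1 \<le> Tt" using eta_facts[OF nn kp T0] by (simp add: Tt_def)
  have "\<forall>i. \<exists>M. \<forall>s\<in>{-T..0}. \<bar>u i s\<bar> \<le> M"
  proof
    fix i
    have "continuous_on {-T..0} (u i)"
      by (rule continuous_on_subset[OF cont[rule_format, of i]]) auto
    then have "compact (u i ` {-T..0})" by (intro compact_continuous_image) auto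
    then have "bounded (u i ` {-T..0})" by (rule compact_imp_bounded)
    then show "\<exists>M. \<forall>s\<in>{-T..0}. \<bar>u i s\<bar> \<le> M" by (auto simp: bounded_real)
  qed
  then obtain Mf where Mf: "\<forall>i. \<forall>s\<in>{-T..0}. \<bar>u i s\<bar> \<le> Mf i"
    using choice[of "\<lambda>i M. \<forall>s\<in>{-T..0}. \<bar>u i s\<bar> \<le> M"] by blast
  define M where "M = (\<Sum>i\<in>UNIV. \<bar>Mf i\<bar>)"
  have M: "\<forall>i. \<forall>s\<in>{-T..0}. - M \<le> u i s \<and> u i s \<le> M"
  proof (intro allI ballI)
    fix i s assume s: "s \<in> {-T..0}"
    have "\<bar>Mf i\<bar> \<le> M" unfolding M_def by (rule member_le_sum) auto
    moreover have "\<bar>u i s\<bar> \<le> Mf i" using Mf s by blast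
    ultimately have "\<bar>u i s\<bar> \<le> M" by simp
    then show "- M \<le> u i s \<and> u i s \<le> M" by auto
  qed
  have it: "\<exists>b B. B - b \<le> (1 - \<eta>)^n * (M - - M) \<and>
      (\<forall>i. \<forall>s\<in>{real n * Tt - T .. real n * Tt}. b \<le> u i s \<and> u i s \<le> B)" for n
  proof (induction n)
    case 0 then show ?case using M by (intro exI[of _ "-M"] exI[of _ M]) simp
  next
    case (Suc n)
    then obtain b B where bB: "B - b \<le> (1 - \<eta>)^n * (M - - M)"
      and bd: "\<forall>i. \<forall>s\<in>{real n * Tt - T .. real n * Tt}. b \<le> u i s \<and> u i s \<le> B" by blast
    have t0: "0 \<le> real n * Tt" using Tt1 by simp
    obtain b' B' where bB': "B' - b' \<le> (1 - \<eta>) * (B - b)"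
      and bd': "\<forall>i. \<forall>s\<in>{real n * Tt + Tt - T .. real n * Tt + Tt}. b' \<le> u i s \<and> u i s \<le> B'"
      using contract_step[OF h t0 bd r] unfolding \<eta>_def Tt_def by blast
    have "(1 - \<eta>) * (B - b) \<le> (1 - \<eta>) * ((1 - \<eta>)^n * (M - - M))"
      using bB \<eta> by (intro mult_left_mono) auto
    then have "B' - b' \<le> (1 - \<eta>)^Suc n * (M - - M)" using bB' by (simp add: mult.assoc)
    moreover have "real (Suc n) * Tt = real n * Tt + Tt" by (simp add: algebra_simps)
    ultimately show ?case using bd' by (intro exI[of _ b'] exI[of _ B']) simp
  qed
  have M0: "0 \<le> M" unfolding M_def by (simp add: sum_nonneg)
  obtain n where n: "(1 - \<eta>)^n < \<epsilon> / (2 * M + 1)"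
    using real_arch_pow_inv[of "\<epsilon> / (2 * M + 1)" "1 - \<eta>"] \<epsilon> M0 \<eta> by auto
  obtain b B where bB: "B - b \<le> (1 - \<eta>)^n * (M - - M)"
    and bd: "\<forall>i. \<forall>s\<in>{real n * Tt - T .. real n * Tt}. b \<le> u i s \<and> u i s \<le> B"
    using it[of n] by blast
  have t0: "0 \<le> real n * Tt" using Tt1 by simp
  have ub: "\<forall>l. \<forall>s\<ge>real n * Tt - T. u l s \<le> B" using inv_upper[OF h t0] bd by auto
  have lb: "\<forall>l. \<forall>s\<ge>real n * Tt - T. b \<le> u l s" using inv_lower[OF h t0] bd by auto
  have "(1 - \<eta>)^n * (M - - M) \<le> \<epsilon> / (2 * M + 1) * (2 * M + 1)"
    using n M0 \<eta> \<epsilon> by (intro mult_mono) auto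
  also have "\<dots> = \<epsilon>" using M0 by simp
  finally have Bbe: "B - b \<le> \<epsilon>" using bB by simp
  show ?thesis
  proof (intro exI[of _ "real n * Tt - T"] allI impI)
    fix i j s s' assume s: "real n * Tt - T \<le> s" and s': "real n * Tt - T \<le> s'"
    have "b \<le> u i s" "u i s \<le> B" "b \<le> u j s'" "u j s' \<le> B" using ub lb s s' by auto
    then show "\<bar>u i s - u j s'\<bar> \<le> \<epsilon>" using Bbe by auto
  qed
qed



lemma tau_max_facts:
  fixes \<tau> :: "'n::finite \<Rightarrow> 'n \<Rightarrow> real"
  shows "0 \<le> tau_max \<tau>" "i \<noteq> j \<Longrightarrow> \<tau> i j \<le> tau_max \<tau>"
proof -
  have "{\<tau> i j |i j. i \<noteq> j} \<subseteq> (\<lambda>p. \<tau> (fst p) (snd p)) ` UNIV"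
  proof (rule subsetI)
    fix z assume "z \<in> {\<tau> i j |i j. i \<noteq> j}"
    then obtain i j where "z = \<tau> i j" by blast
    then show "z \<in> (\<lambda>p. \<tau> (fst p) (snd p)) ` UNIV" by (intro image_eqI[of _ _ "(i,j)"]) auto
  qed
  then have f: "finite (insert 0 {\<tau> i j |i j. i \<noteq> j})" by (meson finite_insert finite_subset finite_imageI finite)
  show "0 \<le> tau_max \<tau>" unfolding tau_max_def using f by (intro Max_ge) auto
  assume "i \<noteq> j"
  then have "\<tau> i j \<in> insert 0 {\<tau> i j |i j. i \<noteq> j}" by blast
  then show "\<tau> i j \<le> tau_max \<tau>" unfolding tau_max_def using f by (intro Max_ge) auto
qed

lemma rhs_id:
  fixes a :: "'n::finite \<Rightarrow> 'n \<Rightarrow> real"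
  assumes K: "K \<noteq> 0" and ci: "c i \<noteq> 0"
    and db: "(\<Sum>j\<in>nbrs a i. a i j * (d$i - d$j)) = (c i * G - \<omega> * (c i + K * (\<Sum>j\<in>nbrs a i. a i j * \<tau> i j))) / K"
  shows "G + K / c i * (\<Sum>j\<in>nbrs a i. a i j * (x j (t - \<tau> i j) - x i t))
    = \<omega> + K / c i * (\<Sum>j\<in>nbrs a i. a i j * ((x j (t - \<tau> i j) - \<omega> * (t - \<tau> i j) - d$j) - (x i t - \<omega> * t - d$i)))"
proof -
  define SU where "SU = (\<Sum>j\<in>nbrs a i. a i j * ((x j (t - \<tau> i j) - \<omega> * (t - \<tau> i j) - d$j) - (x i t - \<omega> * t - d$i)))"
  define A where "A = (\<Sum>j\<in>nbrs a i. a i j * \<tau> i j)"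
  define Dd where "Dd = (\<Sum>j\<in>nbrs a i. a i j * (d$i - d$j))"
  have "(\<Sum>j\<in>nbrs a i. a i j * (x j (t - \<tau> i j) - x i t))
      = (\<Sum>j\<in>nbrs a i. a i j * ((x j (t - \<tau> i j) - \<omega> * (t - \<tau> i j) - d$j) - (x i t - \<omega> * t - d$i))
           - \<omega> * (a i j * \<tau> i j) - a i j * (d$i - d$j))"
    by (rule sum.cong) (simp_all add: algebra_simps)
  also have "\<dots> = SU - \<omega> * A - Dd"
    by (simp add: SU_def A_def Dd_def sum_subtractf sum_distrib_left)
  finally have e: "(\<Sum>j\<in>nbrs a i. a i j * (x j (t - \<tau> i j) - x i t)) = SU - \<omega> * A - Dd" .
  have db': "Dd = (c i * G - \<omega> * (c i + K * A)) / K" using db by (simp add: Dd_def A_def)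
  have "G + K / c i * (SU - \<omega> * A - Dd) = \<omega> + K / c i * SU"
    unfolding db' using K ci by (simp add: field_simps)
  then show ?thesis unfolding e SU_def by simp
qed

lemma sync_main:
  fixes a :: "'n::finite \<Rightarrow> 'n \<Rightarrow> real"
  assumes K: "K > 0" and c: "\<forall>i. c i > 0" and nn: "\<forall>i j. i \<noteq> j \<longrightarrow> 0 \<le> a i j"
    and q: "QSC a" and dok: "delays_ok \<tau>" and g: "normalized_left_null a \<gamma>"
  shows "globally_synchronizes_to g y c K a \<tau> (omega_star g y c K a \<tau> \<gamma>)"
proof -
  define \<omega> where "\<omega> = omega_star g y c K a \<tau> \<gamma>"
  define T where "T = tau_max \<tau>"
  have gl: "\<gamma> v* laplacian a = 0" and gn: "norm \<gamma> = 1" and gp: "\<forall>i. 0 \<le> \<gamma>$i"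
    using g by (auto simp: normalized_left_null_def)
  have g0: "\<gamma> \<noteq> 0" using gn by auto
  define num where "num = (\<Sum>i\<in>UNIV. \<gamma> $ i * c i * g i (y i))"
  define den1 where "den1 = (\<Sum>i\<in>UNIV. \<gamma> $ i * c i)"
  define den2 where "den2 = (\<Sum>i\<in>UNIV. \<Sum>j\<in>nbrs a i. \<gamma> $ i * a i j * \<tau> i j)"
  have den1: "0 < den1"
  proof -
    obtain i0 where "\<gamma>$i0 \<noteq> 0" using g0 by (auto simp: vec_eq_iff)
    then have "0 < \<gamma>$i0 * c i0" using gp c by (simp add: order_le_neq_trans[OF gp[rule_format]] )
    moreover have "\<forall>i\<in>UNIV. 0 \<le> \<gamma>$i * c i" using gp c by (simp add: less_imp_le)
    ultimately show ?thesis unfolding den1_def by (intro sum_pos2[where i=i0]) auto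
  qed
  have den2: "0 \<le> den2" unfolding den2_def
    using gp nn dok by (intro sum_nonneg) (auto simp: nbrs_def delays_ok_def)
  have den: "0 < den1 + K * den2" using den1 den2 K by (simp add: add_pos_nonneg)
  have om: "\<omega> = num / (den1 + K * den2)" by (simp add: \<omega>_def omega_star_def num_def den1_def den2_def)
  define bv :: "real^'n" where
    "bv = (\<chi> i. (c i * g i (y i) - \<omega> * (c i + K * (\<Sum>j\<in>nbrs a i. a i j * \<tau> i j))) / K)"
  have "\<gamma> \<bullet> bv = (\<Sum>i\<in>UNIV. \<gamma>$i * ((c i * g i (y i) - \<omega> * (c i + K * (\<Sum>j\<in>nbrs a i. a i j * \<tau> i j))) / K))"
    by (simp add: inner_vec_def bv_def)
  also have "\<dots> = (num - \<omega> * (den1 + K * den2)) / K"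
  proof -
    have "(\<Sum>i\<in>UNIV. \<gamma>$i * ((c i * g i (y i) - \<omega> * (c i + K * (\<Sum>j\<in>nbrs a i. a i j * \<tau> i j))) / K))
       = (\<Sum>i\<in>UNIV. \<gamma>$i * c i * g i (y i) - \<omega> * (\<gamma>$i * c i) - \<omega> * K * (\<Sum>j\<in>nbrs a i. \<gamma> $ i * a i j * \<tau> i j)) / K"
      unfolding sum_divide_distrib by (rule sum.cong) (simp_all add: sum_distrib_left algebra_simps diff_divide_distrib)
    also have "\<dots> = (num - \<omega> * (den1 + K * den2)) / K"
      by (simp add: num_def den1_def den2_def sum_subtractf sum_distrib_left sum.distrib algebra_simps)
    finally show ?thesis .
  qed
  also have "\<dots> = 0" using den by (simp add: om)
  finally have gb: "\<gamma> \<bullet> bv = 0" .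
  obtain d where Ld: "laplacian a *v d = bv" using lap_range[OF q nn g0 gl gb] by blast
  have db: "(\<Sum>j\<in>nbrs a i. a i j * (d$i - d$j)) = (c i * g i (y i) - \<omega> * (c i + K * (\<Sum>j\<in>nbrs a i. a i j * \<tau> i j))) / K" for i
    using Ld lap_mv[of a d i] by (simp add: bv_def)
  have Kn: "K \<noteq> 0" using K by simp
  have cn: "c i \<noteq> 0" for i using c by (metis less_irrefl)
  have idx: "g i (y i) + K / c i * (\<Sum>j\<in>nbrs a i. a i j * (x j (t - \<tau> i j) - x i t))
    = \<omega> + K / c i * (\<Sum>j\<in>nbrs a i. a i j * ((x j (t - \<tau> i j) - \<omega> * (t - \<tau> i j) - d$j) - (x i t - \<omega> * t - d$i)))"
    for i t and x :: "'n \<Rightarrow> real \<Rightarrow> real"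
    by (rule rhs_id[OF Kn cn db])
  have T0: "0 \<le> T" using tau_max_facts(1) by (simp add: T_def)
  have tauT: "\<forall>i j. i \<noteq> j \<longrightarrow> 0 \<le> \<tau> i j \<and> \<tau> i j \<le> T"
    using dok tau_max_facts(2) by (auto simp: delays_ok_def T_def)
  define xs :: "'n \<Rightarrow> real \<Rightarrow> real" where "xs = (\<lambda>i t. \<omega> * t + d$i)"
  have adm: "admissible_init \<tau> xs"
    unfolding admissible_init_def
  proof (intro allI conjI)
    fix i
    show c1: "continuous_on {- tau_max \<tau>..0} (xs i)" unfolding xs_def by (intro continuous_intros)
    have "compact (xs i ` {- tau_max \<tau>..0})" by (intro compact_continuous_image c1) auto
    then show "bounded (xs i ` {- tau_max \<tau>..0})" by (rule compact_imp_bounded)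
  qed
  have xsd: "(xs i has_real_derivative \<omega>) (at t)" for i t
    unfolding xs_def by (auto intro!: derivative_eq_intros)
  have sol: "is_solution g y c K a \<tau> xs xs"
    unfolding is_solution_def
  proof (intro allI conjI ballI impI)
    fix i
    show "continuous_on {- tau_max \<tau>..} (xs i)" unfolding xs_def by (intro continuous_intros)
    fix t :: real assume "0 < t"
    have "g i (y i) + K / c i * (\<Sum>j\<in>nbrs a i. a i j * (xs j (t - \<tau> i j) - xs i t)) = \<omega>"
      unfolding idx by (simp add: xs_def)
    then show "(xs i has_real_derivative g i (y i) + K / c i * (\<Sum>j\<in>nbrs a i. a i j * (xs j (t - \<tau> i j) - xs i t))) (at t)"
      using xsd by simp
  qed simp
  have conv: "((\<lambda>t. \<bar>deriv (x i) t - \<omega>\<bar>) \<longlongrightarrow> 0) at_top"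
    if adx: "admissible_init \<tau> \<phi>" and sx: "is_solution g y c K a \<tau> \<phi> x" for \<phi> x i
  proof -
    define u where "u = (\<lambda>j t. x j t - \<omega> * t - d$j)"
    have xc: "continuous_on {-T..} (x j)" for j using sx by (simp add: is_solution_def T_def)
    have xd: "(x j has_real_derivative (g j (y j) + K / c j * (\<Sum>l\<in>nbrs a j. a j l * (x l (t - \<tau> j l) - x j t)))) (at t)"
      if "0 < t" for j t using sx that by (simp add: is_solution_def)
    have h: "hom a (\<lambda>i. K / c i) \<tau> T u"
      unfolding hom_def
    proof (intro conjI allI impI)
      show "\<And>i j. i \<noteq> j \<Longrightarrow> 0 \<le> a i j" using nn by simp
      show "\<And>i. 0 < K / c i" using K c by simp
      show "\<And>i j. i \<noteq> j \<Longrightarrow> 0 \<le> \<tau> i j" using tauT by simp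
      show "\<And>i j. i \<noteq> j \<Longrightarrow> \<tau> i j \<le> T" using tauT by simp
      show "0 \<le> T" by (rule T0)
      show "\<And>j. continuous_on {-T..} (u j)" unfolding u_def using xc by (intro continuous_intros) auto
      fix j and t :: real assume t: "0 < t"
      have "(u j has_real_derivative ((g j (y j) + K / c j * (\<Sum>l\<in>nbrs a j. a j l * (x l (t - \<tau> j l) - x j t))) - \<omega> * 1 - 0)) (at t)"
        unfolding u_def by (intro DERIV_diff DERIV_cmult DERIV_ident DERIV_const xd t)
      moreover have "(g j (y j) + K / c j * (\<Sum>l\<in>nbrs a j. a j l * (x l (t - \<tau> j l) - x j t))) - \<omega> * 1 - 0
          = K / c j * (\<Sum>l\<in>nbrs a j. a j l * (u l (t - \<tau> j l) - u j t))"
        unfolding idx by (simp add: u_def)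
      ultimately show "(u j has_real_derivative K / c j * (\<Sum>l\<in>nbrs a j. a j l * (u l (t - \<tau> j l) - u j t))) (at t)"
        by simp
    qed
    obtain r where r: "\<forall>j. reaches a r j" using QSC_root[OF q] by blast
    define D where "D = K / c i * (\<Sum>l\<in>nbrs a i. a i l)"
    have D0: "0 \<le> D" unfolding D_def using K c nn
      by (intro mult_nonneg_nonneg sum_nonneg) (auto simp: nbrs_def less_imp_le)
    show ?thesis
    proof (rule tendstoI)
      fix e :: real assume e: "0 < e"
      define \<epsilon> where "\<epsilon> = e / (D + 1)"
      have \<epsilon>: "0 < \<epsilon>" using e D0 by (simp add: \<epsilon>_def)
      obtain S where S: "\<forall>i j s s'. S \<le> s \<longrightarrow> S \<le> s' \<longrightarrow> \<bar>u i s - u j s'\<bar> \<le> \<epsilon>"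
        using hom_conv[OF h r \<epsilon>] by blast
      have "eventually (\<lambda>t. dist \<bar>deriv (x i) t - \<omega>\<bar> 0 < e) at_top"
        unfolding eventually_at_top_linorder
      proof (intro exI[of _ "max 1 (S + T)"] allI impI)
        fix t assume t: "max 1 (S + T) \<le> t"
        then have t0: "0 < t" by simp
        have "deriv (x i) t = g i (y i) + K / c i * (\<Sum>l\<in>nbrs a i. a i l * (x l (t - \<tau> i l) - x i t))"
          using xd[OF t0] by (rule DERIV_imp_deriv)
        then have dv: "deriv (x i) t - \<omega> = K / c i * (\<Sum>l\<in>nbrs a i. a i l * (u l (t - \<tau> i l) - u i t))"
          unfolding idx by (simp add: u_def)
        have "\<bar>\<Sum>l\<in>nbrs a i. a i l * (u l (t - \<tau> i l) - u i t)\<bar> \<le> (\<Sum>l\<in>nbrs a i. \<bar>a i l * (u l (t - \<tau> i l) - u i t)\<bar>)"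
          by (rule sum_abs)
        also have "\<dots> \<le> (\<Sum>l\<in>nbrs a i. a i l * \<epsilon>)"
        proof (rule sum_mono)
          fix l assume l: "l \<in> nbrs a i"
          have li: "l \<noteq> i" using l by (simp add: nbrs_def)
          have al: "0 \<le> a i l" using nn li by auto
          have "S \<le> t - \<tau> i l" using t tauT[rule_format, of i l] li by auto
          moreover have "S \<le> t" using t T0 by auto
          ultimately have "\<bar>u l (t - \<tau> i l) - u i t\<bar> \<le> \<epsilon>" using S by blast
          then show "\<bar>a i l * (u l (t - \<tau> i l) - u i t)\<bar> \<le> a i l * \<epsilon>"
            using al by (simp add: abs_mult mult_left_mono)
        qed
        also have "\<dots> = (\<Sum>l\<in>nbrs a i. a i l) * \<epsilon>" by (simp add: sum_distrib_right)
        finally have sb: "\<bar>\<Sum>l\<in>nbrs a i. a i l * (u l (t - \<tau> i l) - u i t)\<bar> \<le> (\<Sum>l\<in>nbrs a i. a i l) * \<epsilon>" .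
        have "\<bar>deriv (x i) t - \<omega>\<bar> = K / c i * \<bar>\<Sum>l\<in>nbrs a i. a i l * (u l (t - \<tau> i l) - u i t)\<bar>"
          unfolding dv using K c[rule_format, of i] by (simp add: abs_mult)
        also have "\<dots> \<le> K / c i * ((\<Sum>l\<in>nbrs a i. a i l) * \<epsilon>)"
          using sb K c by (intro mult_left_mono) (auto simp: less_imp_le)
        also have "\<dots> = D * \<epsilon>" by (simp add: D_def)
        also have "\<dots> < e"
        proof -
          have "D * \<epsilon> = e * (D / (D + 1))" using D0 by (simp add: \<epsilon>_def field_simps)
          also have "\<dots> < e * 1" using D0 e by (intro mult_strict_left_mono) auto
          finally show ?thesis by simp
        qed
        finally show "dist \<bar>deriv (x i) t - \<omega>\<bar> 0 < e" by simp
      qed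
      then show "eventually (\<lambda>t. dist \<bar>deriv (x i) t - \<omega>\<bar> 0 < e) at_top" .
    qed
  qed
  show ?thesis
    unfolding globally_synchronizes_to_def \<omega>_def[symmetric]
    using adm sol xsd conv by blast
qed

theorem theorem1:
  fixes g :: "'n::finite \<Rightarrow> real \<Rightarrow> real" and y :: "'n \<Rightarrow> real" and c :: "'n \<Rightarrow> real"
    and K :: real and a :: "'n \<Rightarrow> 'n \<Rightarrow> real"
  assumes "K > 0" and "\<forall>i. c i > 0" and "\<forall>i j. i \<noteq> j \<longrightarrow> 0 \<le> a i j"
  shows "((\<forall>(g'::'n \<Rightarrow> real \<Rightarrow> real) (y'::'n \<Rightarrow> real) \<tau>. delays_ok \<tau> \<longrightarrow>
              globally_synchronizes g' y' c K a \<tau>) \<longleftrightarrow> QSC a)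
    \<and> (QSC a \<longrightarrow>
        (\<forall>\<tau> \<gamma>. delays_ok \<tau> \<longrightarrow> normalized_left_null a \<gamma> \<longrightarrow>
            globally_synchronizes_to g y c K a \<tau> (omega_star g y c K a \<tau> \<gamma>)
            \<and> (\<forall>i. 0 < \<gamma> $ i \<longleftrightarrow> (\<forall>j. j \<noteq> i \<longrightarrow> reaches a i j))))"
proof -
  have P1: "(\<forall>(g'::'n \<Rightarrow> real \<Rightarrow> real) (y'::'n \<Rightarrow> real) \<tau>. delays_ok \<tau> \<longrightarrow>
              globally_synchronizes g' y' c K a \<tau>) \<longleftrightarrow> QSC a"
  proof
    assume all: "\<forall>(g'::'n \<Rightarrow> real \<Rightarrow> real) (y'::'n \<Rightarrow> real) \<tau>. delays_ok \<tau> \<longrightarrow> globally_synchronizes g' y' c K a \<tau>"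
    show "QSC a"
    proof (rule ccontr)
      assume "\<not> QSC a"
      then obtain g' y' \<tau> where "delays_ok \<tau>" "\<not> globally_synchronizes g' y' c K a \<tau>"
        using not_QSC_not_sync[OF assms] by blast
      then show False using all by blast
    qed
  next
    assume q: "QSC a"
    show "\<forall>(g'::'n \<Rightarrow> real \<Rightarrow> real) (y'::'n \<Rightarrow> real) \<tau>. delays_ok \<tau> \<longrightarrow> globally_synchronizes g' y' c K a \<tau>"
    proof (intro allI impI)
      fix g' :: "'n \<Rightarrow> real \<Rightarrow> real" and y' :: "'n \<Rightarrow> real" and \<tau> :: "'n \<Rightarrow> 'n \<Rightarrow> real"
      assume dok: "delays_ok \<tau>"
      obtain \<gamma> where "normalized_left_null a \<gamma>" using exists_gamma[OF assms(3)] by blast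
      then have "globally_synchronizes_to g' y' c K a \<tau> (omega_star g' y' c K a \<tau> \<gamma>)"
        using sync_main[OF assms q dok] by blast
      then show "globally_synchronizes g' y' c K a \<tau>" unfolding globally_synchronizes_def by blast
    qed
  qed
  have P2: "QSC a \<longrightarrow>
        (\<forall>\<tau> \<gamma>. delays_ok \<tau> \<longrightarrow> normalized_left_null a \<gamma> \<longrightarrow>
            globally_synchronizes_to g y c K a \<tau> (omega_star g y c K a \<tau> \<gamma>)
            \<and> (\<forall>i. 0 < \<gamma> $ i \<longleftrightarrow> (\<forall>j. j \<noteq> i \<longrightarrow> reaches a i j)))"
  proof (intro impI allI conjI)
    fix \<tau> :: "'n \<Rightarrow> 'n \<Rightarrow> real" and \<gamma> :: "real^'n" and i :: 'n
    assume q: "QSC a" and dok: "delays_ok \<tau>" and g: "normalized_left_null a \<gamma>"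
    show "globally_synchronizes_to g y c K a \<tau> (omega_star g y c K a \<tau> \<gamma>)"
      by (rule sync_main[OF assms q dok g])
    show "0 < \<gamma> $ i \<longleftrightarrow> (\<forall>j. j \<noteq> i \<longrightarrow> reaches a i j)"
      by (rule gamma_char[OF q assms(3) g])
  qed
  show ?thesis using P1 P2 by blast
qed

end
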